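(* Let $\mathcal{H}_S$ (system) and $\mathcal{H}_B$ (bath) be Hilbert spaces (with all traces below finite, e.g. finite-dimensional). Let $H_S(s)$, $s\in[0,t]$, be a (possibly time-dependent) self-adjoint system Hamiltonian, $H_B$ a time-independent self-adjoint bath Hamiltonian, and $U_t$ any unitary on $\mathcal{H}_S\otimes\mathcal{H}_B$. Fix $\beta_S,\beta_B>0$, put $\Delta\beta=\beta_B-\beta_S$, and set $Z_S(s)={\rm Tr}[e^{-\beta_S H_S(s)}]$, $\tau_S(s)=e^{-\beta_S H_S(s)}/Z_S(s)$, $Z_B={\rm Tr}[e^{-\beta_B H_B}]$, $\tau_B=e^{-\beta_B H_B}/Z_B$, $F_S(s)=-\beta_S^{-1}\ln Z_S(s)$, $\Delta F_S=F_S(t)-F_S(0)$. Let $\{|\epsilon\rangle\}$ be an orthonormal eigenbasis of $H_S(0)$ with eigenvalues $\epsilon$. Define $\Phi_t(\rho)={\rm Tr}_B[U_t(\rho\otimes\tau_B)U_t^\dagger]$, $\Delta\tilde E(\epsilon)={\rm Tr}[H_S(t)\Phi_t(|\epsilon\rangle\langle\epsilon|)]-\epsilon$, $\tilde Z_S(t)=\sum_\epsilon e^{-\beta_S{\rm Tr}[H_S(t)\Phi_t(|\epsilon\rangle\langle\epsilon|)]}$, $$\Theta_{SB}(t)=\sum_\epsilon \frac{e^{-\beta_S{\rm Tr}[H_S(t)\Phi_t(|\epsilon\rangle\langle\epsilon|)]}}{\tilde Z_S(t)}\,U_t(|\epsilon\rangle\langle\epsilon|\otimes\tau_B)U_t^\dagger,\qquad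 \tilde\rho_S(t)={\rm Tr}_B[\Theta_{SB}(t)],$$ $\langle\tilde Q\rangle_B={\rm Tr}[H_B\tau_B]-{\rm Tr}[(\mathbb{1}_S\otimes H_B)\Theta_{SB}(t)]$, and $\tilde W(\epsilon)=\Delta\tilde E(\epsilon)-\langle\tilde Q\rangle_B$. Writing $\langle f\rangle_{\tilde P}=\sum_\epsilon\frac{e^{-\beta_S\epsilon}}{Z_S(0)}f(\epsilon)$ and $\langle\tilde W\rangle=\langle\tilde W\rangle_{\tilde P}$, one has $$\langle e^{-\beta_S\tilde W}\rangle_{\tilde P}=e^{-\beta_S\Delta F_S}\,e^{-D[\Theta_{SB}(t)\|\tau_S(t)\otimes\tau_B]}\,e^{-\Delta\beta\,\langle\tilde Q\rangle_B},$$ and consequently $$\langle\tilde W\rangle\ \ge\ \Delta F_S+\beta_S^{-1}D[\tilde\rho_S(t)\|\tau_S(t)]+\frac{\Delta\beta}{\beta_S}\langle\tilde Q\rangle_B,$$ where $D[\rho\|\sigma]={\rm Tr}[\rho\ln\rho]-{\rm Tr}[\rho\ln\sigma]$ is the quantum relative entropy.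
   Context: Setting: system initially thermal at inverse temperature $\beta_S$, bath initially thermal at inverse temperature $\beta_B$; an initial energy measurement of the system yields $\epsilon$ with probability $e^{-\beta_S\epsilon}/Z_S(0)$, followed by joint evolution $U_t$ of $|\epsilon\rangle\langle\epsilon|\otimes\tau_B$. $\langle\tilde Q\rangle_B$ (guessed quantum heat) is a constant independent of $\epsilon$. *)

theory Defs
  imports "Jordan_Normal_Form.Matrix" "Jordan_Normal_Form.Conjugate"
begin

text \<open>System space C^n, bath space C^m; tensor product C^n (x) C^m = C^(n*m) with the
  Kronecker convention: basis index (i,j) corresponds to i*m + j.\<close>

definition adj :: "complex mat \<Rightarrow> complex mat" where
  "adj A = mat (dim_col A) (dim_row A) (\<lambda>(i,j). cnj (A $$ (j,i)))"

definition hermitian_mat :: "nat \<Rightarrow> complex mat \<Rightarrow> bool" where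
  "hermitian_mat n A \<longleftrightarrow> A \<in> carrier_mat n n \<and> adj A = A"

definition unitary_mat :: "nat \<Rightarrow> complex mat \<Rightarrow> bool" where
  "unitary_mat n U \<longleftrightarrow> U \<in> carrier_mat n n \<and> U * adj U = 1\<^sub>m n \<and> adj U * U = 1\<^sub>m n"

definition mtrace :: "complex mat \<Rightarrow> complex" where
  "mtrace A = (\<Sum>i<dim_row A. A $$ (i,i))"

definition hfun :: "(real \<Rightarrow> real) \<Rightarrow> complex mat \<Rightarrow> complex mat" where
  "hfun f A = (SOME B. \<exists>V d. unitary_mat (dim_row A) V \<and>
      A = V * mat_diag (dim_row A) (\<lambda>i. complex_of_real (d i)) * adj V \<and>
      B = V * mat_diag (dim_row A) (\<lambda>i. complex_of_real (f (d i))) * adj V)"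

definition mexp :: "complex mat \<Rightarrow> complex mat" where
  "mexp A = hfun exp A"

text \<open>Matrix logarithm; with Isabelle's convention ln 0 = 0 this realises 0 ln 0 = 0.\<close>
definition mln :: "complex mat \<Rightarrow> complex mat" where
  "mln A = hfun ln A"

definition rel_entropy :: "complex mat \<Rightarrow> complex mat \<Rightarrow> real" where
  "rel_entropy \<rho> \<sigma> = Re (mtrace (\<rho> * mln \<rho>) - mtrace (\<rho> * mln \<sigma>))"

definition kron :: "complex mat \<Rightarrow> complex mat \<Rightarrow> complex mat" where
  "kron A B = mat (dim_row A * dim_row B) (dim_col A * dim_col B)
     (\<lambda>(i,j). A $$ (i div dim_row B, j div dim_col B) * B $$ (i mod dim_row B, j mod dim_col B))"

definition ptrace_B :: "nat \<Rightarrow> complex mat \<Rightarrow> complex mat" where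
  "ptrace_B m M = mat (dim_row M div m) (dim_col M div m)
     (\<lambda>(i,k). \<Sum>j<m. M $$ (i*m + j, k*m + j))"

definition proj :: "complex vec \<Rightarrow> complex mat" where
  "proj v = mat (dim_vec v) (dim_vec v) (\<lambda>(i,j). v $ i * cnj (v $ j))"

definition part_fun :: "real \<Rightarrow> complex mat \<Rightarrow> real" where
  "part_fun \<beta> H = Re (mtrace (mexp (complex_of_real (- \<beta>) \<cdot>\<^sub>m H)))"

definition gibbs :: "real \<Rightarrow> complex mat \<Rightarrow> complex mat" where
  "gibbs \<beta> H = complex_of_real (1 / part_fun \<beta> H) \<cdot>\<^sub>m mexp (complex_of_real (- \<beta>) \<cdot>\<^sub>m H)"

definition msum :: "nat \<Rightarrow> nat \<Rightarrow> (nat \<Rightarrow> complex mat) \<Rightarrow> complex mat" where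
  "msum N K F = mat N N (\<lambda>(i,j). \<Sum>k<K. F k $$ (i,j))"

end

theory Submission
  imports Defs "Jordan_Normal_Form.Char_Poly"
begin
abbreviation dg :: "nat \<Rightarrow> (nat \<Rightarrow> real) \<Rightarrow> complex mat" where
  "dg n d \<equiv> mat_diag n (\<lambda>i. complex_of_real (d i))"

lemma assoc_dim:
  "dim_col A = dim_row B \<Longrightarrow> dim_col B = dim_row C \<Longrightarrow> A * B * C = A * (B * C)"
  by (rule assoc_mult_mat[of A "dim_row A" "dim_col A" B "dim_col B" C "dim_col C"]) auto

lemma mult_entry:
  assumes "A \<in> carrier_mat a b" "B \<in> carrier_mat b c" "i < a" "j < c"
  shows "(A*B)$$(i,j) = (\<Sum>l<b. A$$(i,l) * B$$(l,j))"
  using assms by (simp add: scalar_prod_def lessThan_atLeast0)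

lemma adj_dim[simp]: "dim_row (adj A) = dim_col A" "dim_col (adj A) = dim_row A"
  by (auto simp: adj_def)

lemma adj_carrier[simp]: "A \<in> carrier_mat a b \<Longrightarrow> adj A \<in> carrier_mat b a"
  by (auto simp: adj_def)

lemma adj_index[simp]: "i < dim_col A \<Longrightarrow> j < dim_row A \<Longrightarrow> adj A $$ (i,j) = cnj (A $$ (j,i))"
  by (auto simp: adj_def)

lemma adj_adj[simp]: "adj (adj A) = A"
  by (rule eq_matI) auto

lemma adj_mult:
  assumes "A \<in> carrier_mat a b" "B \<in> carrier_mat b c"
  shows "adj (A*B) = adj B * adj A"
proof (rule eq_matI)
  fix i j assume "i < dim_row (adj B * adj A)" "j < dim_col (adj B * adj A)"
  then have ij: "i < c" "j < a" using assms by auto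
  show "adj (A*B) $$ (i,j) = (adj B * adj A) $$ (i,j)"
    using assms ij
    by (simp add: scalar_prod_def sum_conjugate mult.commute)
qed (use assms in auto)

lemma adj_dg[simp]: "adj (dg n d) = dg n d"
  by (rule eq_matI) (auto simp: mat_diag_def)

lemma adj_one[simp]: "adj (1\<^sub>m n) = 1\<^sub>m n"
  by (rule eq_matI) auto

lemma adj_smult[simp]: "adj (c \<cdot>\<^sub>m A) = cnj c \<cdot>\<^sub>m adj A"
  by (rule eq_matI) auto

lemma adj_add: "A \<in> carrier_mat a b \<Longrightarrow> B \<in> carrier_mat a b \<Longrightarrow> adj (A + B) = adj A + adj B"
  by (rule eq_matI) auto

lemma mtrace_sum: "A \<in> carrier_mat n n \<Longrightarrow> mtrace A = (\<Sum>i<n. A$$(i,i))"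
  by (auto simp: mtrace_def)

lemma mtrace_comm:
  assumes "A \<in> carrier_mat a b" "B \<in> carrier_mat b a"
  shows "mtrace (A*B) = mtrace (B*A)"
proof -
  have "mtrace (A*B) = (\<Sum>i<a. \<Sum>l<b. A$$(i,l) * B$$(l,i))"
    using assms by (simp add: mtrace_sum[of _ a] scalar_prod_def lessThan_atLeast0)
  also have "\<dots> = (\<Sum>l<b. \<Sum>i<a. B$$(l,i) * A$$(i,l))"
    by (subst sum.swap) (simp add: mult.commute)
  also have "\<dots> = mtrace (B*A)"
    using assms by (simp add: mtrace_sum[of _ b] scalar_prod_def lessThan_atLeast0)
  finally show ?thesis .
qed

lemma mtrace_add: "A \<in> carrier_mat n n \<Longrightarrow> B \<in> carrier_mat n n \<Longrightarrow> mtrace (A + B) = mtrace A + mtrace B"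
  by (simp add: mtrace_sum[of _ n] sum.distrib)

lemma mtrace_smult: "A \<in> carrier_mat n n \<Longrightarrow> mtrace (c \<cdot>\<^sub>m A) = c * mtrace A"
  by (simp add: mtrace_sum[of _ n] sum_distrib_left)

lemma mtrace_diag: "mtrace (mat_diag n f) = (\<Sum>i<n. f i)"
  by (simp add: mtrace_sum[of _ n] mat_diag_def)

lemma mtrace_dg: "mtrace (dg n d) = (\<Sum>i<n. complex_of_real (d i))"
  by (simp add: mtrace_sum[of _ n] mat_diag_def)

lemma mtrace_one: "mtrace (1\<^sub>m n) = of_nat n"
  by (simp add: mtrace_sum[of _ n])

lemma unitaryD:
  assumes "unitary_mat n U"
  shows "U \<in> carrier_mat n n" "U * adj U = 1\<^sub>m n" "adj U * U = 1\<^sub>m n"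
  using assms by (auto simp: unitary_mat_def)

lemma unitaryI:
  assumes "U \<in> carrier_mat n n" "adj U * U = 1\<^sub>m n"
  shows "unitary_mat n U"
  using assms mat_mult_left_right_inverse[of "adj U" n U] by (auto simp: unitary_mat_def)

lemma unitary_adj: "unitary_mat n U \<Longrightarrow> unitary_mat n (adj U)"
  by (auto simp: unitary_mat_def)

lemma unitary_cancel:
  assumes "unitary_mat n V" "dim_row Y = n"
  shows "adj V * (V * Y) = Y" "V * (adj V * Y) = Y"
proof -
  note v = unitaryD[OF assms(1)]
  have "(adj V * V) * Y = adj V * (V * Y)"
    by (rule assoc_mult_mat[of _ n n _ n _ "dim_col Y"]) (use v assms in auto)
  then show "adj V * (V * Y) = Y" using v assms by simp
  have "(V * adj V) * Y = V * (adj V * Y)"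
    by (rule assoc_mult_mat[of _ n n _ n _ "dim_col Y"]) (use v assms in auto)
  then show "V * (adj V * Y) = Y" using v assms by simp
qed

lemma unitary_mult:
  assumes "unitary_mat n U" "unitary_mat n V"
  shows "unitary_mat n (U * V)"
proof -
  note u = unitaryD[OF assms(1)] and v = unitaryD[OF assms(2)]
  have "adj (U*V) * (U*V) = adj V * adj U * (U * V)"
    using u v by (simp add: adj_mult[of U n n V n])
  also have "\<dots> = adj V * (adj U * (U * V))"
    by (rule assoc_mult_mat[of _ n n _ n _ n]) (use u v in auto)
  also have "adj U * (U * V) = V" using u v assms by (simp add: unitary_cancel)
  also have "adj V * V = 1\<^sub>m n" using v by simp
  finally show ?thesis using u v by (intro unitaryI) auto
qed

lemma unitary_one: "unitary_mat n (1\<^sub>m n)"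
  by (auto simp: unitary_mat_def)

lemma conj_entry:
  assumes "V \<in> carrier_mat n n" "a < n" "b < n"
  shows "(V * dg n d * adj V)$$(a,b) = (\<Sum>r<n. V$$(a,r) * complex_of_real (d r) * cnj (V$$(b,r)))"
proof -
  have "V * dg n d = mat n n (\<lambda>(i,j). V$$(i,j) * complex_of_real (d j))"
    using assms by (simp add: mat_diag_mult_right[of V n n])
  then show ?thesis using assms
    by (simp add: scalar_prod_def lessThan_atLeast0)
qed

lemma trace_unitary_conj:
  assumes "unitary_mat n V" "X \<in> carrier_mat n n"
  shows "mtrace (V * X * adj V) = mtrace X"
proof -
  note v = unitaryD[OF assms(1)]
  have "mtrace (V * X * adj V) = mtrace (adj V * (V * X))"
    using v assms by (intro mtrace_comm[of _ n n]) auto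
  also have "adj V * (V * X) = X" using v assms by (simp add: unitary_cancel)
  finally show ?thesis .
qed

lemma conj_mult_conj:
  assumes "unitary_mat n V" "X \<in> carrier_mat n n" "Y \<in> carrier_mat n n"
  shows "V * X * adj V * (V * Y * adj V) = V * (X * Y) * adj V"
proof -
  note v = unitaryD[OF assms(1)]
  have "V * X * adj V * (V * Y * adj V) = V * X * (adj V * (V * (Y * adj V)))"
    using v assms by (simp add: assoc_dim)
  also have "adj V * (V * (Y * adj V)) = Y * adj V" using v assms by (simp add: unitary_cancel)
  finally show ?thesis using v assms by (simp add: assoc_dim)
qed

lemma trace_dg_dg:
  assumes "unitary_mat n V"
  shows "mtrace (V * dg n d * adj V * (V * dg n e * adj V)) = (\<Sum>i<n. complex_of_real (d i * e i))"
  using assms unitaryD[OF assms]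
  by (simp add: conj_mult_conj trace_unitary_conj mtrace_diag)

lemma cs_sum: "(w :: complex vec) \<in> carrier_vec n \<Longrightarrow> v \<bullet>c w = (\<Sum>l<n. v$l * cnj (w$l))"
  by (simp add: scalar_prod_def lessThan_atLeast0)

lemma ortho_exists:
  fixes u :: "nat \<Rightarrow> complex vec"
  assumes "k < n" "\<And>i. i < k \<Longrightarrow> u i \<in> carrier_vec n"
  shows "\<exists>v \<in> carrier_vec n. v \<noteq> 0\<^sub>v n \<and> (\<forall>i<k. v \<bullet>c u i = 0)"
proof -
  define f where "f = (\<lambda>i. if i = n - 1 then 0\<^sub>v n else (if i < k then conjugate (u i) else 0\<^sub>v n))"
  define M where "M = mat\<^sub>r n n f"
  have fc: "f \<in> {0..<n} \<rightarrow> carrier_vec n" using assms unfolding f_def by auto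
  have "M = mat\<^sub>r n n (\<lambda>i. if i = n - 1 then 0\<^sub>v n else f i)"
    unfolding M_def f_def by (rule arg_cong[where f="mat\<^sub>r n n"]) auto
  also have "det \<dots> = 0" by (rule det_row_0) (use assms fc in auto)
  finally have "det M = 0" .
  then obtain v where v: "v \<in> carrier_vec n" "v \<noteq> 0\<^sub>v n" "M *\<^sub>v v = 0\<^sub>v n"
    using det_0_iff_vec_prod_zero[of M n] M_def by auto
  have "v \<bullet>c u i = 0" if "i < k" for i
  proof -
    have "(M *\<^sub>v v) $ i = 0" using v that assms by simp
    moreover have "(M *\<^sub>v v) $ i = conjugate (u i) \<bullet> v"
      using that assms unfolding M_def f_def by simp
    ultimately show ?thesis using conjugate_vec_sprod_comm[of v n "u i"] v assms that by simp
  qed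
  then show ?thesis using v by blast
qed

definition orthonormal :: "nat \<Rightarrow> nat \<Rightarrow> (nat \<Rightarrow> complex vec) \<Rightarrow> bool" where
  "orthonormal n k u \<longleftrightarrow> (\<forall>i<k. u i \<in> carrier_vec n) \<and> (\<forall>i<k. \<forall>j<k. u i \<bullet>c u j = (if i = j then 1 else 0))"

lemma normalize_vec:
  fixes v :: "complex vec"
  assumes "v \<in> carrier_vec n" "v \<noteq> 0\<^sub>v n"
  shows "\<exists>c. (c \<cdot>\<^sub>v v) \<bullet>c (c \<cdot>\<^sub>v v) = 1 \<and> c \<noteq> 0"
proof -
  have gt: "v \<bullet>c v > 0" using assms by simp
  then have re: "Re (v \<bullet>c v) > 0" "Im (v \<bullet>c v) = 0" by (auto simp: less_complex_def)
  define r where "r = Re (v \<bullet>c v)"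
  have vv: "v \<bullet>c v = complex_of_real r" using re unfolding r_def by (simp add: complex_eq_iff)
  define c where "c = complex_of_real (1 / sqrt r)"
  have "(c \<cdot>\<^sub>v v) \<bullet>c (c \<cdot>\<^sub>v v) = c * cnj c * (v \<bullet>c v)"
    using assms by (simp add: cs_sum[of _ n] sum_distrib_left mult_ac)
  also have "\<dots> = complex_of_real ((1 / sqrt r) * (1 / sqrt r) * r)" unfolding c_def vv by (simp only: complex_cnj_complex_of_real of_real_mult)
  also have "(1 / sqrt r) * (1 / sqrt r) * r = 1"
  proof -
    have "r > 0" using re unfolding r_def by simp
    then have "sqrt r * sqrt r = r" by simp
    then show ?thesis using \<open>r > 0\<close> by (simp add: field_simps)
  qed
  finally have "(c \<cdot>\<^sub>v v) \<bullet>c (c \<cdot>\<^sub>v v) = 1" by simp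
  moreover have "c \<noteq> 0" using re unfolding c_def r_def by simp
  ultimately show ?thesis by blast
qed

lemma on_ext_step:
  assumes "orthonormal n k u" "k < n"
  shows "\<exists>w. orthonormal n (Suc k) (u(k := w))"
proof -
  have uc: "\<And>i. i < k \<Longrightarrow> u i \<in> carrier_vec n" using assms by (auto simp: orthonormal_def)
  obtain v where v: "v \<in> carrier_vec n" "v \<noteq> 0\<^sub>v n" "\<forall>i<k. v \<bullet>c u i = 0"
    using ortho_exists[of k n u] assms(2) uc by blast
  obtain c where c: "(c \<cdot>\<^sub>v v) \<bullet>c (c \<cdot>\<^sub>v v) = 1" "c \<noteq> 0" using normalize_vec[OF v(1,2)] by blast
  define w where "w = c \<cdot>\<^sub>v v"
  have wc: "w \<in> carrier_vec n" using v unfolding w_def by simp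
  have w1: "w \<bullet>c u i = 0" if "i < k" for i
  proof -
    have "w \<bullet>c u i = c * (v \<bullet>c u i)" unfolding w_def using uc[OF that] v
      by (simp add: cs_sum[of _ n] sum_distrib_left mult_ac)
    then show ?thesis using v that by simp
  qed
  have w2: "u i \<bullet>c w = 0" if "i < k" for i
  proof -
    have "u i \<bullet>c w = cnj (w \<bullet>c u i)" using uc[OF that] wc
      by (simp add: cs_sum[of _ n] sum_conjugate mult.commute)
    then show ?thesis using w1 that by simp
  qed
  have "orthonormal n (Suc k) (u(k := w))"
    using assms(1) wc w1 w2 c unfolding orthonormal_def w_def[symmetric]
    by (auto simp: less_Suc_eq)
  then show ?thesis by blast
qed

lemma on_ext:
  assumes "orthonormal n k u" "k \<le> n"
  shows "\<exists>W. unitary_mat n W \<and> (\<forall>i<k. col W i = u i)"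
  using assms
proof (induction "n - k" arbitrary: k u)
  case 0
  then have k: "k = n" by simp
  define W where "W = mat n n (\<lambda>(a,i). u i $ a)"
  have Wc: "W \<in> carrier_mat n n" unfolding W_def by simp
  have colW: "col W i = u i" if "i < n" for i
    using 0 that k unfolding W_def orthonormal_def by (intro eq_vecI) auto
  have "adj W * W = 1\<^sub>m n"
  proof (rule eq_matI)
    fix i j assume ij: "i < dim_row (1\<^sub>m n)" "j < dim_col (1\<^sub>m n)"
    have "(adj W * W) $$ (i,j) = (\<Sum>l<n. W$$(l,j) * cnj (W$$(l,i)))"
      using ij Wc by (simp add: scalar_prod_def lessThan_atLeast0 mult.commute)
    also have "\<dots> = u j \<bullet>c u i"
      using ij 0 k unfolding W_def orthonormal_def by (simp add: cs_sum[of _ n])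
    also have "\<dots> = 1\<^sub>m n $$ (i,j)" using ij 0 k unfolding orthonormal_def by auto
    finally show "(adj W * W) $$ (i,j) = 1\<^sub>m n $$ (i,j)" .
  qed (use Wc in auto)
  then show ?case using Wc colW unitaryI k by blast
next
  case (Suc d)
  then have kn: "k < n" by simp
  obtain w where w: "orthonormal n (Suc k) (u(k := w))" using on_ext_step[OF Suc(3) kn] by blast
  have d: "d = n - Suc k" using Suc(2) by simp
  have "\<exists>W. unitary_mat n W \<and> (\<forall>i<Suc k. col W i = (u(k := w)) i)"
    using Suc(1)[OF d w] kn by simp
  then obtain W where "unitary_mat n W" "\<forall>i<Suc k. col W i = (u(k := w)) i" by blast
  then show ?case by (intro exI[of _ W]) auto
qed

lemma mat_diag_dims[simp]: "dim_row (mat_diag n f) = n" "dim_col (mat_diag n f) = n"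
  by (simp_all add: mat_diag_def)

lemma sum_split_at: "(\<Sum>j<k+(d::nat). f j) = (\<Sum>j<k. f j) + (\<Sum>b<d. f (k+b))"
  by (induction d) (auto simp: add.assoc)

lemma cs_conj:
  fixes v w :: "complex vec"
  assumes "v \<in> carrier_vec n" "w \<in> carrier_vec n"
  shows "w \<bullet>c v = cnj (v \<bullet>c w)"
  using assms by (simp add: cs_sum[of _ n] cnj_sum mult.commute)

lemma herm_entry:
  assumes "A \<in> carrier_mat n n" "adj A = A" "i < n" "j < n"
  shows "cnj (A$$(i,j)) = A$$(j,i)"
proof -
  have "adj A $$ (j,i) = cnj (A$$(i,j))" using assms(1,3,4) by simp
  from this[unfolded assms(2)] show ?thesis by simp
qed

lemma herm_quad_real:
  assumes "A \<in> carrier_mat n n" "adj A = A"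
  shows "cnj (\<Sum>i<n. \<Sum>j<n. cnj (y i) * A$$(i,j) * y j) = (\<Sum>i<n. \<Sum>j<n. cnj (y i) * A$$(i,j) * y j)"
proof -
  have "cnj (\<Sum>i<n. \<Sum>j<n. cnj (y i) * A$$(i,j) * y j) = (\<Sum>i<n. \<Sum>j<n. y i * A$$(j,i) * cnj (y j))"
    using herm_entry[OF assms] by (simp add: cnj_sum)
  also have "\<dots> = (\<Sum>j<n. \<Sum>i<n. cnj (y j) * A$$(j,i) * y i)"
    by (subst sum.swap) (simp add: mult_ac)
  finally show ?thesis .
qed

lemma spectral_step:
  assumes A: "A \<in> carrier_mat n n" "adj A = A" and W: "unitary_mat n W" and k: "k < n"
    and eig: "\<forall>i<k. A *\<^sub>v col W i = complex_of_real (d i) \<cdot>\<^sub>v col W i"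
  shows "\<exists>W' d'. unitary_mat n W' \<and> (\<forall>i<Suc k. A *\<^sub>v col W' i = complex_of_real (d' i) \<cdot>\<^sub>v col W' i)"
proof -
  note w = unitaryD[OF W]
  define B where "B = adj W * A * W"
  have Bc: "B \<in> carrier_mat n n" unfolding B_def using A w by auto
  have Bh: "adj B = B" unfolding B_def using A w
    by (simp add: adj_mult[of _ n n _ n] assoc_mult_mat[of _ n n _ n _ n])
  have AW: "(A * W) $$ (l,i) = complex_of_real (d i) * W $$ (l,i)" if "l < n" "i < k" for l i
  proof -
    have "(A * W) $$ (l,i) = (A *\<^sub>v col W i) $ l" using that k A w by simp
    also have "\<dots> = complex_of_real (d i) * W $$ (l,i)" using eig that k A w by simp
    finally show ?thesis .
  qed
  have Bcol: "B $$ (j,i) = (if j = i then complex_of_real (d i) else 0)" if "j < n" "i < k" for i j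
  proof -
    have "B = adj W * (A * W)" unfolding B_def using A w by (simp add: assoc_mult_mat[of _ n n _ n _ n])
    then have "B $$ (j,i) = (\<Sum>l<n. adj W $$ (j,l) * (A * W) $$ (l,i))"
      using that k A w by (simp only:) (rule mult_entry[of _ n n _ n], auto)
    also have "\<dots> = complex_of_real (d i) * (\<Sum>l<n. adj W $$ (j,l) * W $$ (l,i))"
      using AW that by (simp add: sum_distrib_left mult_ac)
    also have "(\<Sum>l<n. adj W $$ (j,l) * W $$ (l,i)) = (adj W * W) $$ (j,i)"
      by (rule mult_entry[symmetric, of _ n n _ n]) (use that k w in auto)
    also have "\<dots> = (if j = i then 1 else 0)" using w(3) that k by (simp del: index_mult_mat)
    finally show ?thesis by simp
  qed
  have Brow: "B $$ (i,j) = 0" if "j < n" "i < k" "j \<ge> k" for i j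
  proof -
    have "B $$ (i,j) = cnj (B $$ (j,i))" using herm_entry[OF Bc Bh, of j i] that k by simp
    then show ?thesis using Bcol[of j i] that by simp
  qed
  define C where "C = mat (n-k) (n-k) (\<lambda>(a,b). B $$ (k+a, k+b))"
  have Cc: "C \<in> carrier_mat (n-k) (n-k)" unfolding C_def by simp
  obtain as where as: "char_poly C = (\<Prod>a\<leftarrow>as. [:- a, 1:])" "length as = n - k"
    using char_poly_factorized[OF Cc] by blast
  define \<mu> where "\<mu> = hd as"
  have "as \<noteq> []" using as k by auto
  then have "\<mu> \<in> set as" unfolding \<mu>_def by simp
  then have "poly (char_poly C) \<mu> = 0" unfolding as(1)
    by (simp add: poly_prod_list prod_list_zero_iff)
  then have "eigenvalue C \<mu>" using eigenvalue_root_char_poly[OF Cc] by simp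
  then obtain y where y: "y \<in> carrier_vec (n-k)" "y \<noteq> 0\<^sub>v (n-k)" "C *\<^sub>v y = \<mu> \<cdot>\<^sub>v y"
    unfolding eigenvalue_def eigenvector_def using Cc by auto
  define y' where "y' = vec n (\<lambda>i. if i < k then 0 else y $ (i - k))"
  have y'c: "y' \<in> carrier_vec n" unfolding y'_def by simp
  have nkd: "n = k + (n - k)" using k by simp
  have By': "B *\<^sub>v y' = \<mu> \<cdot>\<^sub>v y'"
  proof (rule eq_vecI)
    fix i assume "i < dim_vec (\<mu> \<cdot>\<^sub>v y')"
    then have i: "i < n" unfolding y'_def by simp
    have "(B *\<^sub>v y') $ i = (\<Sum>j<n. B $$ (i,j) * y' $ j)"
      using i Bc y'c by (simp add: scalar_prod_def lessThan_atLeast0)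
    also have "\<dots> = (\<Sum>j<k. B $$ (i,j) * y' $ j) + (\<Sum>b<n-k. B $$ (i,k+b) * y' $ (k+b))"
      by (subst nkd, subst sum_split_at) simp
    also have "\<dots> = (\<Sum>b<n-k. B $$ (i,k+b) * y $ b)"
      unfolding y'_def using k by simp
    also have "\<dots> = (\<mu> \<cdot>\<^sub>v y') $ i"
    proof (cases "i < k")
      case True
      then show ?thesis using Brow[of _ i] i unfolding y'_def by simp
    next
      case False
      then have ik: "i - k < n - k" "k + (i - k) = i" using i by auto
      have "(C *\<^sub>v y) $ (i - k) = (\<Sum>b<n-k. B $$ (i,k+b) * y $ b)"
        using ik y(1) Cc unfolding C_def by (simp add: scalar_prod_def lessThan_atLeast0)
      then show ?thesis using y(1,3) ik False i unfolding y'_def by simp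
    qed
    finally show "(B *\<^sub>v y') $ i = (\<mu> \<cdot>\<^sub>v y') $ i" .
  qed (use Bc in \<open>simp add: y'_def\<close>)
  have y'nz: "y' \<noteq> 0\<^sub>v n"
  proof
    assume z: "y' = 0\<^sub>v n"
    have "y $ b = 0" if "b < n - k" for b
    proof -
      have "y' $ (k+b) = 0" using z that by simp
      then show ?thesis using that unfolding y'_def by simp
    qed
    then have "y = 0\<^sub>v (n-k)" using y(1) by (intro eq_vecI) auto
    then show False using y(2) by simp
  qed
  define x where "x = W *\<^sub>v y'"
  have xc: "x \<in> carrier_vec n" unfolding x_def using w y'c by simp
  have WB: "W * B = A * W"
  proof -
    have "W * B = W * (adj W * (A * W))" unfolding B_def using w A
      by (simp add: assoc_mult_mat[of _ n n _ n _ n])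
    then show ?thesis using unitary_cancel(2)[OF W, of "A*W"] A by simp
  qed
  have Ax: "A *\<^sub>v x = \<mu> \<cdot>\<^sub>v x"
  proof -
    have "A *\<^sub>v x = (A * W) *\<^sub>v y'" unfolding x_def using A w y'c by simp
    also have "\<dots> = (W * B) *\<^sub>v y'" using WB by simp
    also have "\<dots> = W *\<^sub>v (\<mu> \<cdot>\<^sub>v y')" using w Bc y'c By' by simp
    also have "\<dots> = \<mu> \<cdot>\<^sub>v x" unfolding x_def using w y'c by (simp add: mult_mat_vec)
    finally show ?thesis .
  qed
  have Wx: "adj W *\<^sub>v x = y'" unfolding x_def using w y'c
    by (simp flip: assoc_mult_mat_vec[of _ n n _ n])
  have xnz: "x \<noteq> 0\<^sub>v n"
  proof
    assume "x = 0\<^sub>v n"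
    then have "adj W *\<^sub>v x = 0\<^sub>v n" using w by (intro eq_vecI) (auto simp: scalar_prod_def)
    then show False using Wx y'nz by simp
  qed
  have xorth: "x \<bullet>c col W i = 0" if "i < k" for i
  proof -
    have "(adj W *\<^sub>v x) $ i = (\<Sum>l<n. cnj (W $$ (l,i)) * x $ l)"
      using that k w xc by (simp add: scalar_prod_def lessThan_atLeast0)
    moreover have "x \<bullet>c col W i = (\<Sum>l<n. x $ l * cnj (W $$ (l,i)))"
      using that k w by (subst cs_sum[of _ n]) (auto simp: carrier_vecI)
    moreover have "(adj W *\<^sub>v x) $ i = 0" using Wx that k unfolding y'_def by simp
    ultimately show ?thesis by (simp add: mult.commute)
  qed
  define q where "q = (\<Sum>i<n. \<Sum>j<n. cnj (y' $ i) * B$$(i,j) * y' $ j)"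
  define s where "s = (\<Sum>i<n. cmod (y' $ i) ^ 2)"
  have q_eq: "q = \<mu> * complex_of_real s"
  proof -
    have "q = (\<Sum>i<n. cnj (y' $ i) * (B *\<^sub>v y') $ i)"
    proof -
      have Bv: "(B *\<^sub>v y') $ i = (\<Sum>j<n. B$$(i,j) * y'$j)" if "i < n" for i
        using Bc y'c that by (simp add: scalar_prod_def lessThan_atLeast0)
      show ?thesis unfolding q_def by (intro sum.cong refl) (simp add: Bv sum_distrib_left mult.assoc)
    qed
    also have "\<dots> = (\<Sum>i<n. \<mu> * (cnj (y' $ i) * y' $ i))" using By' y'c by (simp add: mult_ac)
    also have "\<dots> = (\<Sum>i<n. \<mu> * complex_of_real (cmod (y' $ i) ^ 2))"
      by (intro sum.cong refl) (metis complex_norm_square mult.commute)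
    also have "\<dots> = \<mu> * complex_of_real s" unfolding s_def
      by (simp only: sum_distrib_left of_real_sum)
    finally show ?thesis .
  qed
  have qr: "cnj q = q" unfolding q_def by (rule herm_quad_real[OF Bc Bh])
  have spos: "s > 0"
  proof -
    obtain i where i: "i < n" "y' $ i \<noteq> 0"
      using y'nz y'c by (metis eq_vecI carrier_vecD index_zero_vec(1) index_zero_vec(2))
    have "cmod (y' $ i) ^ 2 > 0" using i by simp
    moreover have "cmod (y' $ i) ^ 2 \<le> s" unfolding s_def using i
      by (intro member_le_sum) auto
    ultimately show ?thesis by linarith
  qed
  have mu_real: "\<mu> = complex_of_real (Re \<mu>)"
  proof -
    have "cnj \<mu> * complex_of_real s = \<mu> * complex_of_real s" using qr q_eq by simp
    then have "cnj \<mu> = \<mu>" using spos by simp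
    then show ?thesis by (metis Reals_cnj_iff complex_is_Real_iff of_real_Re)
  qed
  obtain c where c: "(c \<cdot>\<^sub>v x) \<bullet>c (c \<cdot>\<^sub>v x) = 1" "c \<noteq> 0" using normalize_vec[OF xc xnz] by blast
  define u where "u = (\<lambda>i. if i = k then c \<cdot>\<^sub>v x else col W i)"
  have colorth: "col W i \<bullet>c col W j = (if i = j then 1 else 0)" if "i < n" "j < n" for i j
  proof -
    have e1: "(adj W * W)$$(j,i) = (\<Sum>l<n. adj W $$ (j,l) * W$$(l,i))"
      by (rule mult_entry[of _ n n _ n]) (use that w in auto)
    have e2: "col W i \<bullet>c col W j = (\<Sum>l<n. col W i $ l * cnj (col W j $ l))"
      by (rule cs_sum) (use that w in auto)
    have "col W i \<bullet>c col W j = (adj W * W) $$ (j,i)"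
      unfolding e1 e2 using that w by (intro sum.cong refl) (simp add: mult.commute)
    then show ?thesis using w(3) that by (simp del: index_mult_mat)
  qed
  have on: "orthonormal n (Suc k) u"
    unfolding orthonormal_def
  proof (intro conjI allI impI)
    fix i assume "i < Suc k" then show "u i \<in> carrier_vec n" unfolding u_def using xc w k by auto
  next
    fix i j assume ij: "i < Suc k" "j < Suc k"
    have o1: "(c \<cdot>\<^sub>v x) \<bullet>c col W l = 0" if "l < k" for l
      using xorth[OF that] xc w that k by (simp add: cs_sum[of _ n] sum_distrib_left[symmetric] mult.assoc)
    have o2: "col W l \<bullet>c (c \<cdot>\<^sub>v x) = 0" if "l < k" for l
    proof -
      have "col W l \<bullet>c (c \<cdot>\<^sub>v x) = cnj ((c \<cdot>\<^sub>v x) \<bullet>c col W l)"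
        by (rule cs_conj[of _ n]) (use xc w that k in auto)
      then show ?thesis using o1[OF that] by simp
    qed
    show "u i \<bullet>c u j = (if i = j then 1 else 0)"
      using ij o1 o2 c colorth k unfolding u_def by (auto simp: less_Suc_eq)
  qed
  obtain W' where W': "unitary_mat n W'" "\<forall>i<Suc k. col W' i = u i"
    using on_ext[OF on] k by auto
  define d' where "d' = d(k := Re \<mu>)"
  have "\<forall>i<Suc k. A *\<^sub>v col W' i = complex_of_real (d' i) \<cdot>\<^sub>v col W' i"
  proof (intro allI impI)
    fix i assume i: "i < Suc k"
    show "A *\<^sub>v col W' i = complex_of_real (d' i) \<cdot>\<^sub>v col W' i"
    proof (cases "i = k")
      case True
      have "A *\<^sub>v (c \<cdot>\<^sub>v x) = c \<cdot>\<^sub>v (A *\<^sub>v x)" using A xc by (simp add: mult_mat_vec)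
      also have "\<dots> = \<mu> \<cdot>\<^sub>v (c \<cdot>\<^sub>v x)" using Ax by (simp add: smult_smult_assoc mult.commute)
      finally show ?thesis using True W' mu_real unfolding u_def d'_def by simp
    next
      case False
      then show ?thesis using W' eig i unfolding u_def d'_def by simp
    qed
  qed
  then show ?thesis using W'(1) by blast
qed

lemma spectral_aux:
  assumes A: "A \<in> carrier_mat n n" "adj A = A" and k: "k \<le> n"
  shows "\<exists>W d. unitary_mat n W \<and> (\<forall>i<k. A *\<^sub>v col W i = complex_of_real (d i) \<cdot>\<^sub>v col W i)"
  using k
proof (induction k)
  case 0
  then show ?case using unitary_one by blast
next
  case (Suc k)
  then obtain W d where "unitary_mat n W" "\<forall>i<k. A *\<^sub>v col W i = complex_of_real (d i) \<cdot>\<^sub>v col W i"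
    by auto
  then show ?case using spectral_step[OF A, of W k d] Suc(2) by auto
qed

theorem spectral:
  assumes "hermitian_mat n A"
  shows "\<exists>W d. unitary_mat n W \<and> A = W * dg n d * adj W"
proof -
  have A: "A \<in> carrier_mat n n" "adj A = A" using assms by (auto simp: hermitian_mat_def)
  obtain W d where W: "unitary_mat n W" and eig: "\<forall>i<n. A *\<^sub>v col W i = complex_of_real (d i) \<cdot>\<^sub>v col W i"
    using spectral_aux[OF A order_refl] by blast
  note w = unitaryD[OF W]
  have AW: "A * W = W * dg n d"
  proof (rule eq_matI)
    fix a i assume ai: "a < dim_row (W * dg n d)" "i < dim_col (W * dg n d)"
    then have ai': "a < n" "i < n" using w by auto
    have "(A * W) $$ (a,i) = (A *\<^sub>v col W i) $ a" using ai' A w by simp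
    also have "\<dots> = complex_of_real (d i) * W $$ (a,i)" using eig ai' A w by simp
    also have "\<dots> = (W * dg n d) $$ (a,i)" using ai' w
      by (simp add: mat_diag_mult_right[of W n n] mult.commute)
    finally show "(A * W) $$ (a,i) = (W * dg n d) $$ (a,i)" .
  qed (use A w in auto)
  have "A = A * (W * adj W)" using A w by simp
  also have "\<dots> = (A * W) * adj W" using A w by (simp add: assoc_mult_mat[of _ n n _ n _ n])
  also have "\<dots> = W * dg n d * adj W" using AW by simp
  finally show ?thesis using W by blast
qed

lemma mult_sq_carrier[simp]: "A \<in> carrier_mat n n \<Longrightarrow> B \<in> carrier_mat n n \<Longrightarrow> A * B \<in> carrier_mat n n"
  by (rule mult_carrier_mat)

lemma sq_assoc: "A \<in> carrier_mat n n \<Longrightarrow> B \<in> carrier_mat n n \<Longrightarrow> C \<in> carrier_mat n n \<Longrightarrow> A * B * C = A * (B * C)"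
  by (rule assoc_mult_mat[of _ n n _ n _ n])

lemma hfun_eq:
  assumes V: "unitary_mat n V" and A: "A = V * dg n d * adj V"
  shows "hfun f A = V * dg n (\<lambda>i. f (d i)) * adj V"
proof -
  note v = unitaryD[OF V]
  have dimA: "dim_row A = n" using A v by simp
  have ex: "\<exists>B. \<exists>V d. unitary_mat (dim_row A) V \<and>
      A = V * mat_diag (dim_row A) (\<lambda>i. complex_of_real (d i)) * adj V \<and>
      B = V * mat_diag (dim_row A) (\<lambda>i. complex_of_real (f (d i))) * adj V"
    unfolding dimA using V A by blast
  have hf: "hfun f A = (SOME B. \<exists>V d. unitary_mat n V \<and> A = V * dg n d * adj V \<and>
      B = V * dg n (\<lambda>i. f (d i)) * adj V)" unfolding hfun_def dimA ..
  have "\<exists>V d. unitary_mat n V \<and> A = V * dg n d * adj V \<and> hfun f A = V * dg n (\<lambda>i. f (d i)) * adj V"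
    unfolding hf by (rule someI_ex[OF ex[unfolded dimA]])
  then obtain V' d' where V': "unitary_mat n V'" and A': "A = V' * dg n d' * adj V'"
    and h: "hfun f A = V' * dg n (\<lambda>i. f (d' i)) * adj V'" by blast
  note v' = unitaryD[OF V']
  define M where "M = adj V' * V"
  have Mc: "M \<in> carrier_mat n n" unfolding M_def using v v' by (metis adj_carrier mult_carrier_mat)
  have e1: "adj V' * A * V = dg n d' * M"
  proof -
    have "adj V' * A * V = adj V' * (V' * (dg n d' * (adj V' * V)))"
      unfolding A' using v v' by (simp add: sq_assoc[of _ n])
    also have "\<dots> = dg n d' * M" unfolding M_def using V' v v' by (simp add: unitary_cancel)
    finally show ?thesis .
  qed
  have e2: "adj V' * A * V = M * dg n d"
  proof -
    have "adj V' * A * V = adj V' * (V * (dg n d * (adj V * V)))"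
      unfolding A using v v' by (simp add: sq_assoc[of _ n])
    also have "\<dots> = M * dg n d" unfolding M_def using v v' by (simp add: sq_assoc[of _ n])
    finally show ?thesis .
  qed
  have ent: "complex_of_real (d' i) * M $$ (i,j) = M $$ (i,j) * complex_of_real (d j)" if "i < n" "j < n" for i j
  proof -
    have "(dg n d' * M) $$ (i,j) = (M * dg n d) $$ (i,j)" using e1 e2 by simp
    then show ?thesis using that Mc by (simp add: mat_diag_mult_left[of M n n] mat_diag_mult_right[of M n n])
  qed
  have fM: "dg n (\<lambda>i. f (d' i)) * M = M * dg n (\<lambda>i. f (d i))"
  proof -
    have "complex_of_real (f (d' i)) * M $$ (i,j) = M $$ (i,j) * complex_of_real (f (d j))"
      if "i < n" "j < n" for i j
    proof (cases "M $$ (i,j) = 0")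
      case False
      then have "d' i = d j" using ent[OF that] by (simp add: mult.commute)
      then show ?thesis by (simp add: mult.commute)
    qed simp
    then show ?thesis using Mc by (intro eq_matI) (auto simp: mat_diag_mult_left[of M n n] mat_diag_mult_right[of M n n])
  qed
  have "V' * dg n (\<lambda>i. f (d' i)) * adj V' = V' * (dg n (\<lambda>i. f (d' i)) * (adj V' * (V * adj V)))"
    using v v' by (simp add: sq_assoc[of _ n])
  also have "\<dots> = V' * ((dg n (\<lambda>i. f (d' i)) * M) * adj V)"
    unfolding M_def using v v' by (simp add: sq_assoc[of _ n])
  also have "\<dots> = V' * (M * (dg n (\<lambda>i. f (d i)) * adj V))"
    unfolding fM using v v' Mc by (simp add: sq_assoc[of _ n])
  also have "\<dots> = V * dg n (\<lambda>i. f (d i)) * adj V"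
    unfolding M_def using V' v v' by (simp add: sq_assoc[of _ n] unitary_cancel)
  finally show ?thesis using h by simp
qed

lemma sum_nm: "(\<Sum>r<n*m. f r) = (\<Sum>i<n. \<Sum>j<(m::nat). f (i*m+j))"
proof (induction n)
  case (Suc n)
  have "(\<Sum>r<Suc n * m. f r) = (\<Sum>r<n*m + m. f r)" by (simp add: add.commute)
  also have "\<dots> = (\<Sum>r<n*m. f r) + (\<Sum>b<m. f (n*m+b))" by (rule sum_split_at)
  finally show ?case using Suc by simp
qed simp

lemma divm[simp]: "j < (m::nat) \<Longrightarrow> (i*m+j) div m = i"
  by simp
lemma modm[simp]: "j < (m::nat) \<Longrightarrow> (i*m+j) mod m = j"
  by simp

lemma kron_dims[simp]: "dim_row (kron A B) = dim_row A * dim_row B" "dim_col (kron A B) = dim_col A * dim_col B"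
  by (auto simp: kron_def)

lemma kron_carrier[simp]: "A \<in> carrier_mat a b \<Longrightarrow> B \<in> carrier_mat c d \<Longrightarrow> kron A B \<in> carrier_mat (a*c) (b*d)"
  by (auto simp: kron_def)

lemma kron_index:
  assumes "A \<in> carrier_mat a b" "B \<in> carrier_mat c d" "i < a*c" "j < b*d"
  shows "kron A B $$ (i,j) = A $$ (i div c, j div d) * B $$ (i mod c, j mod d)"
  using assms by (auto simp: kron_def)

lemma idx_lt: "i < a \<Longrightarrow> k < c \<Longrightarrow> i*c+k < a*(c::nat)"
proof -
  assume "i < a" "k < c"
  then have "i*c + k < (i+1)*c" by simp
  also have "(i+1)*c \<le> a*c" using \<open>i < a\<close> by (intro mult_le_mono1) simp
  finally show ?thesis .
qed

lemma kron_index2: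
  assumes "A \<in> carrier_mat a b" "B \<in> carrier_mat c d" "i < a" "j < b" "k < c" "l < d"
  shows "kron A B $$ (i*c+k, j*d+l) = A $$ (i, j) * B $$ (k, l)"
  using assms idx_lt[of i a k c] idx_lt[of j b l d] by (simp add: kron_index)

lemma idx_split: assumes "r < a*(c::nat)" obtains i k where "i < a" "k < c" "r = i*c+k"
proof -
  have c: "c > 0" using assms by (cases c) auto
  have "r div c < a" using assms by (simp add: less_mult_imp_div_less)
  moreover have "r mod c < c" using c by simp
  moreover have "r = (r div c)*c + r mod c" by simp
  ultimately show ?thesis using that by blast
qed

lemma kron_mult:
  assumes A: "A \<in> carrier_mat a b" and B: "B \<in> carrier_mat c d"
    and C: "C \<in> carrier_mat b e" and D: "D \<in> carrier_mat d f"
  shows "kron A B * kron C D = kron (A*C) (B*D)"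
proof (rule eq_matI)
  fix r s assume "r < dim_row (kron (A*C) (B*D))" "s < dim_col (kron (A*C) (B*D))"
  then have rs: "r < a*c" "s < e*f" using A B C D by auto
  obtain i k where ik: "i < a" "k < c" "r = i*c+k" using idx_split[OF rs(1)] by blast
  obtain j l where jl: "j < e" "l < f" "s = j*f+l" using idx_split[OF rs(2)] by blast
  have "(kron A B * kron C D) $$ (r,s) = (\<Sum>t<b*d. kron A B $$ (r,t) * kron C D $$ (t,s))"
    by (rule mult_entry[of _ "a*c" "b*d" _ "e*f"]) (use A B C D rs in auto)
  also have "\<dots> = (\<Sum>p<b. \<Sum>q<d. A$$(i,p) * B$$(k,q) * (C$$(p,j) * D$$(q,l)))"
    unfolding sum_nm ik(3) jl(3) using A B C D ik jl by (simp add: kron_index2)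
  also have "\<dots> = (\<Sum>p<b. A$$(i,p) * C$$(p,j)) * (\<Sum>q<d. B$$(k,q) * D$$(q,l))"
    by (simp add: sum_product mult_ac)
  also have "\<dots> = (A*C)$$(i,j) * (B*D)$$(k,l)"
    using A B C D ik jl by (simp add: scalar_prod_def lessThan_atLeast0)
  also have "\<dots> = kron (A*C) (B*D) $$ (r,s)"
    unfolding ik(3) jl(3) using A B C D ik jl
    by (simp add: kron_index2[of "A*C" a e "B*D" c f])
  finally show "(kron A B * kron C D) $$ (r,s) = kron (A*C) (B*D) $$ (r,s)" .
qed (use A B C D in auto)

lemma adj_kron:
  assumes A: "A \<in> carrier_mat a b" and B: "B \<in> carrier_mat c d"
  shows "adj (kron A B) = kron (adj A) (adj B)"
proof (rule eq_matI)
  fix r s assume "r < dim_row (kron (adj A) (adj B))" "s < dim_col (kron (adj A) (adj B))"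
  then have rs: "r < b*d" "s < a*c" using A B by auto
  obtain i k where ik: "i < b" "k < d" "r = i*d+k" using idx_split[OF rs(1)] by blast
  obtain j l where jl: "j < a" "l < c" "s = j*c+l" using idx_split[OF rs(2)] by blast
  show "adj (kron A B) $$ (r,s) = kron (adj A) (adj B) $$ (r,s)"
    unfolding ik(3) jl(3) using A B ik jl rs
    by (simp add: kron_index2[of "adj A" b a "adj B" d c] kron_index2[of A a b B c d])
qed (use A B in auto)

lemma kron_diag:
  assumes "b > 0"
  shows "kron (mat_diag a u) (mat_diag b v) = mat_diag (a*b) (\<lambda>s. u (s div b) * v (s mod b))"
proof (rule eq_matI)
  fix r s assume "r < dim_row (mat_diag (a*b) (\<lambda>s. u (s div b) * v (s mod b)))"
    "s < dim_col (mat_diag (a*b) (\<lambda>s. u (s div b) * v (s mod b)))"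
  then have rs: "r < a*b" "s < a*b" by auto
  obtain i k where ik: "i < a" "k < b" "r = i*b+k" using idx_split[OF rs(1)] by blast
  obtain j l where jl: "j < a" "l < b" "s = j*b+l" using idx_split[OF rs(2)] by blast
  have eq: "(i*b+k = j*b+l) \<longleftrightarrow> (i = j \<and> k = l)"
    using ik jl by (metis divm modm)
  show "kron (mat_diag a u) (mat_diag b v) $$ (r,s) = mat_diag (a*b) (\<lambda>s. u (s div b) * v (s mod b)) $$ (r,s)"
    unfolding ik(3) jl(3) using ik jl rs eq
    by (simp add: kron_index2[of _ a a _ b b] mat_diag_def)
qed auto

lemma kron_one: "b > 0 \<Longrightarrow> kron (1\<^sub>m a) (1\<^sub>m b) = 1\<^sub>m (a*b)"
  using kron_diag[of b a "\<lambda>_. 1" "\<lambda>_. 1"] by (simp add: mat_diag_one[symmetric] del: mat_diag_one)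

lemma unitary_kron:
  assumes V: "unitary_mat a V" and W: "unitary_mat b W" and b: "b > 0"
  shows "unitary_mat (a*b) (kron V W)"
proof -
  note v = unitaryD[OF V] and w = unitaryD[OF W]
  have "adj (kron V W) * kron V W = kron (adj V * V) (adj W * W)"
    using v w by (simp add: adj_kron[of _ a a _ b b] kron_mult[of _ a a _ b b _ a _ b])
  also have "\<dots> = 1\<^sub>m (a*b)" using v w b by (simp add: kron_one)
  finally show ?thesis using v w by (intro unitaryI) auto
qed

lemma dm_bounds: "i < a*(c::nat) \<Longrightarrow> i div c < a" "i < a*(c::nat) \<Longrightarrow> i mod c < c"
  by (simp add: less_mult_imp_div_less) (cases c, auto)

lemma kron_add_left: "A \<in> carrier_mat a b \<Longrightarrow> A' \<in> carrier_mat a b \<Longrightarrow> B \<in> carrier_mat c d \<Longrightarrow>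
  kron (A + A') B = kron A B + kron A' B"
  apply (rule eq_matI)
  subgoal for i j using dm_bounds[of i a c] dm_bounds[of j b d] by (simp add: kron_def algebra_simps)
  by (auto simp: kron_def)

lemma kron_add_right: "A \<in> carrier_mat a b \<Longrightarrow> B \<in> carrier_mat c d \<Longrightarrow> B' \<in> carrier_mat c d \<Longrightarrow>
  kron A (B + B') = kron A B + kron A B'"
  apply (rule eq_matI)
  subgoal for i j using dm_bounds[of i a c] dm_bounds[of j b d] by (simp add: kron_def algebra_simps)
  by (auto simp: kron_def)

lemma kron_smult_left: "A \<in> carrier_mat a b \<Longrightarrow> B \<in> carrier_mat c d \<Longrightarrow> kron (x \<cdot>\<^sub>m A) B = x \<cdot>\<^sub>m kron A B"
  apply (rule eq_matI)
  subgoal for i j using dm_bounds[of i a c] dm_bounds[of j b d] by (simp add: kron_def algebra_simps)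
  by (auto simp: kron_def)

lemma kron_smult_right: "A \<in> carrier_mat a b \<Longrightarrow> B \<in> carrier_mat c d \<Longrightarrow> kron A (x \<cdot>\<^sub>m B) = x \<cdot>\<^sub>m kron A B"
  apply (rule eq_matI)
  subgoal for i j using dm_bounds[of i a c] dm_bounds[of j b d] by (simp add: kron_def algebra_simps)
  by (auto simp: kron_def)

lemma ptrace_carrier[simp]: "M \<in> carrier_mat (n*m) (n*m) \<Longrightarrow> m > 0 \<Longrightarrow> ptrace_B m M \<in> carrier_mat n n"
  by (auto simp: ptrace_B_def)

lemma ptrace_dims[simp]: "M \<in> carrier_mat (n*m) (n*m) \<Longrightarrow> m > 0 \<Longrightarrow> dim_row (ptrace_B m M) = n"
   "M \<in> carrier_mat (n*m) (n*m) \<Longrightarrow> m > 0 \<Longrightarrow> dim_col (ptrace_B m M) = n"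
  by (auto simp: ptrace_B_def)

lemma msum_dims[simp]: "dim_row (msum N K F) = N" "dim_col (msum N K F) = N"
  by (auto simp: msum_def)

lemma ptrace_index: "M \<in> carrier_mat (n*m) (n*m) \<Longrightarrow> m > 0 \<Longrightarrow> i < n \<Longrightarrow> k < n \<Longrightarrow>
  ptrace_B m M $$ (i,k) = (\<Sum>j<m. M $$ (i*m+j, k*m+j))"
  by (auto simp: ptrace_B_def)

lemma trace_ptrace:
  assumes M: "M \<in> carrier_mat (n*m) (n*m)" and H: "H \<in> carrier_mat n n" and m: "m > 0"
  shows "mtrace (H * ptrace_B m M) = mtrace (kron H (1\<^sub>m m) * M)"
proof -
  have P: "ptrace_B m M \<in> carrier_mat n n" using M m by simp
  have "mtrace (H * ptrace_B m M) = (\<Sum>i<n. \<Sum>k<n. H $$ (i,k) * (\<Sum>j<m. M $$ (k*m+j, i*m+j)))"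
    using H P M m by (simp add: mtrace_sum[of _ n] scalar_prod_def lessThan_atLeast0 ptrace_index)
  also have "\<dots> = (\<Sum>i<n. \<Sum>j<m. \<Sum>k<n. \<Sum>l<m. kron H (1\<^sub>m m) $$ (i*m+j, k*m+l) * M $$ (k*m+l, i*m+j))"
  proof (rule sum.cong[OF refl])
    fix i assume i: "i \<in> {..<n}"
    have "(\<Sum>k<n. H $$ (i,k) * (\<Sum>j<m. M $$ (k*m+j, i*m+j)))
        = (\<Sum>j<m. \<Sum>k<n. H $$ (i,k) * M $$ (k*m+j, i*m+j))"
      by (subst sum.swap) (simp add: sum_distrib_left)
    also have "\<dots> = (\<Sum>j<m. \<Sum>k<n. \<Sum>l<m. kron H (1\<^sub>m m) $$ (i*m+j, k*m+l) * M $$ (k*m+l, i*m+j))"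
    proof (intro sum.cong refl)
      fix j k assume jk: "j \<in> {..<m}" "k \<in> {..<n}"
      have e: "kron H (1\<^sub>m m) $$ (i*m+j, k*m+l) = H $$ (i,k) * (if j = l then 1 else 0)" if "l < m" for l
        using i jk H that by (simp add: kron_index2[of H n n "1\<^sub>m m" m m])
      have "(\<Sum>l<m. kron H (1\<^sub>m m) $$ (i*m+j, k*m+l) * M $$ (k*m+l, i*m+j))
          = (\<Sum>l<m. if l = j then H $$ (i,k) * M $$ (k*m+l, i*m+j) else 0)"
        using e by (intro sum.cong refl) auto
      also have "\<dots> = H $$ (i,k) * M $$ (k*m+j, i*m+j)" using jk by simp
      finally show "H $$ (i,k) * M $$ (k*m+j, i*m+j) =
          (\<Sum>l<m. kron H (1\<^sub>m m) $$ (i*m+j, k*m+l) * M $$ (k*m+l, i*m+j))" by simp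
    qed
    finally show "(\<Sum>k<n. H $$ (i,k) * (\<Sum>j<m. M $$ (k*m+j, i*m+j)))
        = (\<Sum>j<m. \<Sum>k<n. \<Sum>l<m. kron H (1\<^sub>m m) $$ (i*m+j, k*m+l) * M $$ (k*m+l, i*m+j))" .
  qed
  also have "\<dots> = mtrace (kron H (1\<^sub>m m) * M)"
    using H M by (simp add: mtrace_sum[of _ "n*m"] scalar_prod_def lessThan_atLeast0[symmetric] sum_nm)
  finally show ?thesis .
qed

lemma adj_ptrace:
  assumes M: "M \<in> carrier_mat (n*m) (n*m)" and m: "m > 0"
  shows "adj (ptrace_B m M) = ptrace_B m (adj M)"
proof (rule eq_matI)
  fix i k assume "i < dim_row (ptrace_B m (adj M))" "k < dim_col (ptrace_B m (adj M))"
  then have ik: "i < n" "k < n" using M m adj_carrier[OF M] ptrace_dims[of "adj M" n m] by auto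
  have "adj (ptrace_B m M) $$ (i,k) = cnj (\<Sum>j<m. M $$ (k*m+j, i*m+j))"
    using M m ik by (simp add: ptrace_index)
  also have "\<dots> = (\<Sum>j<m. adj M $$ (i*m+j, k*m+j))"
    unfolding cnj_sum using M ik idx_lt[of i n _ m] idx_lt[of k n _ m] by (intro sum.cong refl) auto
  also have "\<dots> = ptrace_B m (adj M) $$ (i,k)"
    using M m ik by (intro ptrace_index[of "adj M" n m, symmetric]) auto
  finally show "adj (ptrace_B m M) $$ (i,k) = ptrace_B m (adj M) $$ (i,k)" .
qed (simp_all add: ptrace_dims[OF adj_carrier[OF M] m] ptrace_dims[OF M m])

lemma msum_carrier[simp]: "msum N K F \<in> carrier_mat N N"
  by (simp add: msum_def)

lemma msum_index: "i < N \<Longrightarrow> j < N \<Longrightarrow> msum N K F $$ (i,j) = (\<Sum>k<K. F k $$ (i,j))"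
  by (simp add: msum_def)

lemma trace_msum:
  assumes X: "X \<in> carrier_mat N N" and F: "\<And>k. k < K \<Longrightarrow> F k \<in> carrier_mat N N"
  shows "mtrace (X * msum N K F) = (\<Sum>k<K. mtrace (X * F k))"
proof -
  have "mtrace (X * msum N K F) = (\<Sum>i<N. \<Sum>l<N. X $$ (i,l) * (\<Sum>k<K. F k $$ (l,i)))"
    using X by (simp add: mtrace_sum[of _ N] scalar_prod_def lessThan_atLeast0 msum_index)
  also have "\<dots> = (\<Sum>i<N. \<Sum>l<N. \<Sum>k<K. X $$ (i,l) * F k $$ (l,i))"
    by (simp add: sum_distrib_left)
  also have "\<dots> = (\<Sum>i<N. \<Sum>k<K. \<Sum>l<N. X $$ (i,l) * F k $$ (l,i))"
    by (rule sum.cong[OF refl], rule sum.swap)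
  also have "\<dots> = (\<Sum>k<K. \<Sum>i<N. \<Sum>l<N. X $$ (i,l) * F k $$ (l,i))"
    by (rule sum.swap)
  also have "\<dots> = (\<Sum>k<K. mtrace (X * F k))"
  proof (intro sum.cong refl)
    fix k assume "k \<in> {..<K}"
    then have Fk: "F k \<in> carrier_mat N N" using F by simp
    show "(\<Sum>i<N. \<Sum>l<N. X $$ (i,l) * F k $$ (l,i)) = mtrace (X * F k)"
      using X Fk by (simp add: mtrace_sum[of _ N] scalar_prod_def lessThan_atLeast0)
  qed
  finally show ?thesis .
qed

lemma smult_conj:
  assumes "V \<in> carrier_mat n n" "D \<in> carrier_mat n n"
  shows "x \<cdot>\<^sub>m (V * D * adj V) = V * (x \<cdot>\<^sub>m D) * adj V"
  using assms by (simp add: mult_smult_distrib[of _ n n _ n] mult_smult_assoc_mat[of _ n n _ n])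

lemma smult_dg: "complex_of_real r \<cdot>\<^sub>m dg n h = dg n (\<lambda>i. r * h i)"
  by (rule eq_matI) (auto simp: mat_diag_def)

lemma unitary_rows:
  assumes "unitary_mat n V" "a < n" "b < n"
  shows "(\<Sum>r<n. V$$(a,r) * cnj (V$$(b,r))) = (if a = b then 1 else 0)"
proof -
  note v = unitaryD[OF assms(1)]
  have "(V * adj V) $$ (a,b) = (\<Sum>r<n. V$$(a,r) * adj V $$ (r,b))"
    by (rule mult_entry[of _ n n _ n]) (use v assms in auto)
  also have "\<dots> = (\<Sum>r<n. V$$(a,r) * cnj (V$$(b,r)))" using v assms by simp
  finally show ?thesis using v(2) assms by (simp del: index_mult_mat)
qed

lemma unitary_cols:
  assumes "unitary_mat n V" "a < n" "b < n"
  shows "(\<Sum>r<n. cnj (V$$(r,a)) * V$$(r,b)) = (if a = b then 1 else 0)"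
proof -
  note v = unitaryD[OF assms(1)]
  have "(adj V * V) $$ (a,b) = (\<Sum>r<n. adj V$$(a,r) * V $$ (r,b))"
    by (rule mult_entry[of _ n n _ n]) (use v assms in auto)
  also have "\<dots> = (\<Sum>r<n. cnj (V$$(r,a)) * V$$(r,b))" using v assms by simp
  finally show ?thesis using v(3) assms by (simp del: index_mult_mat)
qed

lemma conj_lin:
  assumes V: "unitary_mat n V"
  shows "V * dg n (\<lambda>i. a * u i + b) * adj V = complex_of_real a \<cdot>\<^sub>m (V * dg n u * adj V) + complex_of_real b \<cdot>\<^sub>m 1\<^sub>m n"
proof -
  note v = unitaryD[OF V]
  show ?thesis
  proof (rule eq_matI)
    fix i j assume "i < dim_row (complex_of_real a \<cdot>\<^sub>m (V * dg n u * adj V) + complex_of_real b \<cdot>\<^sub>m 1\<^sub>m n)"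
      "j < dim_col (complex_of_real a \<cdot>\<^sub>m (V * dg n u * adj V) + complex_of_real b \<cdot>\<^sub>m 1\<^sub>m n)"
    then have ij: "i < n" "j < n" using v by auto
    have "(V * dg n (\<lambda>i. a * u i + b) * adj V) $$ (i,j)
       = complex_of_real a * (\<Sum>r<n. V$$(i,r) * complex_of_real (u r) * cnj (V$$(j,r)))
         + complex_of_real b * (\<Sum>r<n. V$$(i,r) * cnj (V$$(j,r)))"
      by (subst conj_entry[OF v(1) ij]) (simp add: sum_distrib_left sum.distrib algebra_simps)
    also have "\<dots> = (complex_of_real a \<cdot>\<^sub>m (V * dg n u * adj V) + complex_of_real b \<cdot>\<^sub>m 1\<^sub>m n) $$ (i,j)"
      using v ij by (simp add: conj_entry unitary_rows[OF V] del: index_mult_mat(1))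
    finally show "(V * dg n (\<lambda>i. a * u i + b) * adj V) $$ (i,j) =
      (complex_of_real a \<cdot>\<^sub>m (V * dg n u * adj V) + complex_of_real b \<cdot>\<^sub>m 1\<^sub>m n) $$ (i,j)" .
  qed (use v in auto)
qed

lemma gibbs_decomp:
  assumes V: "unitary_mat n V" and H: "H = V * dg n h * adj V"
  shows "part_fun \<beta> H = (\<Sum>i<n. exp (- \<beta> * h i))"
    and "gibbs \<beta> H = V * dg n (\<lambda>i. exp (- \<beta> * h i) / part_fun \<beta> H) * adj V"
proof -
  note v = unitaryD[OF V]
  have e: "complex_of_real (- \<beta>) \<cdot>\<^sub>m H = V * dg n (\<lambda>i. - \<beta> * h i) * adj V"
    unfolding H by (simp only: smult_conj[OF v(1) mat_diag_dim] smult_dg)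
  have me: "mexp (complex_of_real (- \<beta>) \<cdot>\<^sub>m H) = V * dg n (\<lambda>i. exp (- \<beta> * h i)) * adj V"
    unfolding mexp_def e by (rule hfun_eq[OF V refl])
  show pf: "part_fun \<beta> H = (\<Sum>i<n. exp (- \<beta> * h i))"
    unfolding part_fun_def me using V by (simp add: trace_unitary_conj mtrace_dg)
  show "gibbs \<beta> H = V * dg n (\<lambda>i. exp (- \<beta> * h i) / part_fun \<beta> H) * adj V"
    unfolding gibbs_def me by (simp only: smult_conj[OF v(1) mat_diag_dim] smult_dg) simp
qed

lemma conj_kron:
  assumes V: "V \<in> carrier_mat a a" and W: "W \<in> carrier_mat b b" and b: "b > 0"
  shows "kron (V * dg a u * adj V) (W * dg b v * adj W)
       = kron V W * dg (a*b) (\<lambda>s. u (s div b) * v (s mod b)) * adj (kron V W)"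
proof -
  have "kron (V * dg a u * adj V) (W * dg b v * adj W) = kron (V * dg a u) (W * dg b v) * kron (adj V) (adj W)"
    using V W by (simp add: kron_mult[of _ a a _ b b _ a _ b])
  also have "kron (V * dg a u) (W * dg b v) = kron V W * kron (dg a u) (dg b v)"
    using V W by (simp add: kron_mult[of _ a a _ b b _ a _ b])
  also have "kron (dg a u) (dg b v) = dg (a*b) (\<lambda>s. u (s div b) * v (s mod b))"
    using b by (simp add: kron_diag)
  finally show ?thesis using V W by (simp add: adj_kron[of _ a a _ b b])
qed

lemma msum_conj:
  assumes R: "R \<in> carrier_mat N N"
  shows "msum N K (\<lambda>k. complex_of_real (c k) \<cdot>\<^sub>m (R * dg N (\<mu> k) * adj R))
       = R * dg N (\<lambda>r. \<Sum>k<K. c k * \<mu> k r) * adj R"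
proof (rule eq_matI)
  fix i j assume "i < dim_row (R * dg N (\<lambda>r. \<Sum>k<K. c k * \<mu> k r) * adj R)"
    "j < dim_col (R * dg N (\<lambda>r. \<Sum>k<K. c k * \<mu> k r) * adj R)"
  then have ij: "i < N" "j < N" using R by auto
  have "msum N K (\<lambda>k. complex_of_real (c k) \<cdot>\<^sub>m (R * dg N (\<mu> k) * adj R)) $$ (i,j)
      = (\<Sum>k<K. complex_of_real (c k) * (\<Sum>r<N. R$$(i,r) * complex_of_real (\<mu> k r) * cnj (R$$(j,r))))"
    using R ij by (simp add: msum_index conj_entry del: index_mult_mat(1))
  also have "\<dots> = (\<Sum>r<N. R$$(i,r) * complex_of_real (\<Sum>k<K. c k * \<mu> k r) * cnj (R$$(j,r)))"
    by (simp add: sum_distrib_left sum_distrib_right sum.swap[of _ "{..<K}"] mult_ac)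
  also have "\<dots> = (R * dg N (\<lambda>r. \<Sum>k<K. c k * \<mu> k r) * adj R) $$ (i,j)"
    by (subst conj_entry[OF R ij]) simp
  finally show "msum N K (\<lambda>k. complex_of_real (c k) \<cdot>\<^sub>m (R * dg N (\<mu> k) * adj R)) $$ (i,j) =
      (R * dg N (\<lambda>r. \<Sum>k<K. c k * \<mu> k r) * adj R) $$ (i,j)" .
qed (use R in auto)

lemma zcz: "z * complex_of_real x * cnj z = complex_of_real ((cmod z)^2 * x)"
proof -
  have "z * cnj z = complex_of_real ((cmod z)^2)" by (rule complex_norm_square[symmetric])
  then show ?thesis by (metis (no_types) mult.assoc mult.commute of_real_mult)
qed

lemma trace_two_conj:
  assumes X: "unitary_mat N X" and R: "unitary_mat N R"
  shows "mtrace (X * dg N c * adj X * (R * dg N l * adj R))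
       = complex_of_real (\<Sum>s<N. c s * (\<Sum>r<N. (cmod ((adj X * R) $$ (s,r)))^2 * l r))"
proof -
  note x = unitaryD[OF X] and rr = unitaryD[OF R]
  define M where "M = adj X * R"
  have Mc: "M \<in> carrier_mat N N" unfolding M_def using x rr by simp
  have "X * dg N c * adj X * (R * dg N l * adj R) = X * (dg N c * (M * dg N l * adj M)) * adj X"
    unfolding M_def using x rr
    by (simp add: sq_assoc[of _ N] adj_mult[of _ N N _ N] unitary_cancel)
  then have "mtrace (X * dg N c * adj X * (R * dg N l * adj R)) = mtrace (dg N c * (M * dg N l * adj M))"
    using X Mc by (simp add: trace_unitary_conj)
  also have "\<dots> = (\<Sum>s<N. complex_of_real (c s) * (M * dg N l * adj M) $$ (s,s))"
    using Mc by (simp add: mtrace_sum[of _ N] mat_diag_mult_left[of _ N N])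
  also have "\<dots> = (\<Sum>s<N. complex_of_real (c s) * complex_of_real (\<Sum>r<N. (cmod (M $$ (s,r)))^2 * l r))"
  proof (intro sum.cong refl)
    fix s assume s: "s \<in> {..<N}"
    have "(M * dg N l * adj M) $$ (s,s) = (\<Sum>r<N. M$$(s,r) * complex_of_real (l r) * cnj (M$$(s,r)))"
      using Mc s by (simp add: conj_entry del: index_mult_mat(1))
    also have "\<dots> = complex_of_real (\<Sum>r<N. (cmod (M $$ (s,r)))^2 * l r)"
      unfolding of_real_sum by (intro sum.cong refl) (rule zcz)
    finally show "complex_of_real (c s) * (M * dg N l * adj M) $$ (s,s) =
      complex_of_real (c s) * complex_of_real (\<Sum>r<N. (cmod (M $$ (s,r)))^2 * l r)" by simp
  qed
  finally show ?thesis unfolding M_def by simp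
qed

lemma xlnx_ineq:
  fixes x y :: real
  assumes "x > 0" "y > 0"
  shows "x * ln x \<ge> x * ln y + x - y"
proof -
  have "ln (y / x) \<le> y / x - 1" using assms by (intro ln_le_minus_one) simp
  then have "x * ln (y / x) \<le> x * (y / x - 1)" using assms by (intro mult_left_mono) auto
  also have "x * (y / x - 1) = y - x" using assms by (simp add: field_simps)
  finally have "x * ln (y / x) \<le> y - x" .
  moreover have "ln (y / x) = ln y - ln x" using assms by (simp add: ln_div)
  ultimately show ?thesis by (simp add: algebra_simps)
qed

lemma klein:
  fixes w :: "nat \<Rightarrow> nat \<Rightarrow> real" and l y :: "nat \<Rightarrow> real"
  assumes w0: "\<And>s r. w s r \<ge> 0"
    and rows: "\<And>s. s < N \<Longrightarrow> (\<Sum>r<N. w s r) = 1"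
    and cols: "\<And>r. r < N \<Longrightarrow> (\<Sum>s<N. w s r) = 1"
    and lpos: "\<And>r. r < N \<Longrightarrow> l r > 0" and ypos: "\<And>s. s < N \<Longrightarrow> y s > 0"
  shows "(\<Sum>r<N. l r * ln (l r)) \<ge> (\<Sum>s<N. (\<Sum>r<N. w s r * l r) * ln (y s)) + (\<Sum>r<N. l r) - (\<Sum>s<N. y s)"
proof -
  have "(\<Sum>r<N. l r * ln (l r)) = (\<Sum>r<N. (\<Sum>s<N. w s r) * (l r * ln (l r)))"
    using cols by simp
  also have "\<dots> = (\<Sum>s<N. \<Sum>r<N. w s r * (l r * ln (l r)))"
    by (simp add: sum_distrib_right) (rule sum.swap)
  also have "\<dots> \<ge> (\<Sum>s<N. \<Sum>r<N. w s r * (l r * ln (y s) + l r - y s))"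
    using w0 lpos ypos xlnx_ineq by (intro sum_mono mult_left_mono) auto
  also have "(\<Sum>s<N. \<Sum>r<N. w s r * (l r * ln (y s) + l r - y s))
      = (\<Sum>s<N. (\<Sum>r<N. w s r * l r) * ln (y s)) + (\<Sum>s<N. \<Sum>r<N. w s r * l r) - (\<Sum>s<N. y s * (\<Sum>r<N. w s r))"
    by (simp add: algebra_simps sum.distrib sum_subtractf sum_distrib_left sum_distrib_right)
  also have "(\<Sum>s<N. \<Sum>r<N. w s r * l r) = (\<Sum>r<N. l r)"
    using cols by (subst sum.swap) (simp add: sum_distrib_right[symmetric])
  also have "(\<Sum>s<N. y s * (\<Sum>r<N. w s r)) = (\<Sum>s<N. y s)"
    using rows by simp
  finally show ?thesis .
qed

lemma jensen_exp:
  fixes P x :: "nat \<Rightarrow> real"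
  assumes P0: "\<And>k. k < n \<Longrightarrow> P k \<ge> 0" and P1: "(\<Sum>k<n. P k) = 1"
  shows "exp (\<Sum>k<n. P k * x k) \<le> (\<Sum>k<n. P k * exp (x k))"
proof -
  define c where "c = (\<Sum>k<n. P k * x k)"
  have "(\<Sum>k<n. P k * (exp c * (1 + (x k - c)))) \<le> (\<Sum>k<n. P k * exp (x k))"
  proof (intro sum_mono mult_left_mono)
    fix k assume k: "k \<in> {..<n}"
    have "exp c * (1 + (x k - c)) \<le> exp c * exp (x k - c)"
      by (intro mult_left_mono) (auto simp: exp_ge_add_one_self)
    then show "exp c * (1 + (x k - c)) \<le> exp (x k)" by (simp add: exp_diff)
    show "0 \<le> P k" using P0 k by simp
  qed
  moreover have "(\<Sum>k<n. P k * (exp c * (1 + (x k - c)))) = exp c * ((\<Sum>k<n. P k) + (\<Sum>k<n. P k * x k) - c * (\<Sum>k<n. P k))"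
    by (simp add: algebra_simps sum.distrib sum_subtractf sum_distrib_left sum_distrib_right)
  moreover have "\<dots> = exp c" using P1 unfolding c_def by simp
  ultimately show ?thesis unfolding c_def by simp
qed

lemma mat_diag_cong: "(\<And>i. i < n \<Longrightarrow> f i = g i) \<Longrightarrow> mat_diag n f = mat_diag n g"
  by (rule eq_matI) (auto simp: mat_diag_def)

lemma msum_cong: "(\<And>k. k < K \<Longrightarrow> F k = G k) \<Longrightarrow> msum N K F = msum N K G"
  unfolding msum_def by (rule eq_matI) auto

lemma es_unitary:
  fixes es :: "nat \<Rightarrow> complex vec"
  assumes dim: "\<And>k. k < n \<Longrightarrow> es k \<in> carrier_vec n"
    and orth: "\<And>k l. k < n \<Longrightarrow> l < n \<Longrightarrow> es k \<bullet>c es l = (if k = l then 1 else 0)"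
  shows "unitary_mat n (mat n n (\<lambda>(a,k). es k $ a))"
proof (rule unitaryI)
  define V0 where "V0 = mat n n (\<lambda>(a,k). es k $ a)"
  show "mat n n (\<lambda>(a,k). es k $ a) \<in> carrier_mat n n" by simp
  show "adj (mat n n (\<lambda>(a,k). es k $ a)) * mat n n (\<lambda>(a,k). es k $ a) = 1\<^sub>m n"
  proof (rule eq_matI)
    fix i j assume ij: "i < dim_row (1\<^sub>m n)" "j < dim_col (1\<^sub>m n)"
    have "(adj (mat n n (\<lambda>(a,k). es k $ a)) * mat n n (\<lambda>(a,k). es k $ a)) $$ (i,j)
        = (\<Sum>l<n. cnj (es i $ l) * es j $ l)"
      using ij by (simp add: scalar_prod_def lessThan_atLeast0)
    also have "\<dots> = es j \<bullet>c es i" using ij dim by (simp add: cs_sum[of _ n] mult.commute)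
    also have "\<dots> = 1\<^sub>m n $$ (i,j)" using ij orth by auto
    finally show "(adj (mat n n (\<lambda>(a,k). es k $ a)) * mat n n (\<lambda>(a,k). es k $ a)) $$ (i,j) = 1\<^sub>m n $$ (i,j)" .
  qed auto
qed

lemma proj_decomp:
  fixes es :: "nat \<Rightarrow> complex vec"
  assumes dim: "\<And>k. k < n \<Longrightarrow> es k \<in> carrier_vec n" and k: "k < n"
  shows "proj (es k) = mat n n (\<lambda>(a,k). es k $ a) * dg n (\<lambda>i. if i = k then 1 else 0) * adj (mat n n (\<lambda>(a,k). es k $ a))"
proof (rule eq_matI)
  fix a b assume "a < dim_row (mat n n (\<lambda>(a,k). es k $ a) * dg n (\<lambda>i. if i = k then 1 else 0) * adj (mat n n (\<lambda>(a,k). es k $ a)))"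
    "b < dim_col (mat n n (\<lambda>(a,k). es k $ a) * dg n (\<lambda>i. if i = k then 1 else 0) * adj (mat n n (\<lambda>(a,k). es k $ a)))"
  then have ab: "a < n" "b < n" by auto
  have "(mat n n (\<lambda>(a,k). es k $ a) * dg n (\<lambda>i. if i = k then 1 else 0) * adj (mat n n (\<lambda>(a,k). es k $ a))) $$ (a,b)
    = (\<Sum>r<n. mat n n (\<lambda>(a,k). es k $ a) $$ (a,r) * complex_of_real (if r = k then 1 else 0) * cnj (mat n n (\<lambda>(a,k). es k $ a) $$ (b,r)))"
    by (rule conj_entry) (use ab in auto)
  also have "\<dots> = (\<Sum>r<n. if r = k then es k $ a * cnj (es k $ b) else 0)"
    using ab by (intro sum.cong refl) auto
  also have "\<dots> = proj (es k) $$ (a,b)" using ab k dim[OF k] by (simp add: proj_def)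
  finally show "proj (es k) $$ (a,b) = (mat n n (\<lambda>(a,k). es k $ a) * dg n (\<lambda>i. if i = k then 1 else 0) * adj (mat n n (\<lambda>(a,k). es k $ a))) $$ (a,b)" by simp
qed (use dim[OF k] in \<open>auto simp: proj_def\<close>)

lemma eig_decomp:
  fixes es :: "nat \<Rightarrow> complex vec"
  assumes H: "H \<in> carrier_mat n n"
    and dim: "\<And>k. k < n \<Longrightarrow> es k \<in> carrier_vec n"
    and orth: "\<And>k l. k < n \<Longrightarrow> l < n \<Longrightarrow> es k \<bullet>c es l = (if k = l then 1 else 0)"
    and eig: "\<And>k. k < n \<Longrightarrow> H *\<^sub>v es k = complex_of_real (eps k) \<cdot>\<^sub>v es k"
  shows "H = mat n n (\<lambda>(a,k). es k $ a) * dg n eps * adj (mat n n (\<lambda>(a,k). es k $ a))"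
proof -
  define V where "V = mat n n (\<lambda>(a,k). es k $ a)"
  have V: "unitary_mat n V" unfolding V_def by (rule es_unitary[OF dim orth])
  note v = unitaryD[OF V]
  have colV: "col V k = es k" if "k < n" for k
    unfolding V_def using dim[OF that] that by (intro eq_vecI) auto
  have HV: "H * V = V * dg n eps"
  proof (rule eq_matI)
    fix a i assume ai: "a < dim_row (V * dg n eps)" "i < dim_col (V * dg n eps)"
    then have ai': "a < n" "i < n" using v by auto
    have "(H * V) $$ (a,i) = (H *\<^sub>v col V i) $ a" using ai' H v by simp
    also have "\<dots> = complex_of_real (eps i) * V $$ (a,i)" using eig ai' H v colV dim[of i] unfolding V_def by simp
    also have "\<dots> = (V * dg n eps) $$ (a,i)" using ai' v
      by (simp add: mat_diag_mult_right[of V n n] mult.commute)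
    finally show "(H * V) $$ (a,i) = (V * dg n eps) $$ (a,i)" .
  qed (use H v in auto)
  have "H = H * (V * adj V)" using H v by simp
  also have "\<dots> = (H * V) * adj V" using H v by (simp add: sq_assoc[of _ n])
  finally show ?thesis using HV unfolding V_def by simp
qed

lemma dg_split:
  assumes m: "m > 0"
  shows "dg (n*m) (\<lambda>s. a (s div m) + b (s mod m)) = kron (dg n a) (1\<^sub>m m) + kron (1\<^sub>m n) (dg m b)"
proof -
  have "kron (dg n a) (1\<^sub>m m) = dg (n*m) (\<lambda>s. a (s div m))"
    using kron_diag[OF m, of n "\<lambda>i. complex_of_real (a i)" "\<lambda>_. 1"] by simp
  moreover have "kron (1\<^sub>m n) (dg m b) = dg (n*m) (\<lambda>s. b (s mod m))"
    using kron_diag[OF m, of n "\<lambda>_. 1" "\<lambda>i. complex_of_real (b i)"] by simp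
  ultimately show ?thesis by (auto simp: mat_diag_def)
qed

lemma trace_mult_add: "X \<in> carrier_mat n n \<Longrightarrow> A \<in> carrier_mat n n \<Longrightarrow> B \<in> carrier_mat n n \<Longrightarrow>
  mtrace (X * (A + B)) = mtrace (X * A) + mtrace (X * B)"
  by (simp add: mult_add_distrib_mat[of _ n n] mtrace_add[of _ n])

lemma trace_mult_smult: "X \<in> carrier_mat n n \<Longrightarrow> A \<in> carrier_mat n n \<Longrightarrow>
  mtrace (X * (c \<cdot>\<^sub>m A)) = c * mtrace (X * A)"
  by (simp add: mult_smult_distrib[of _ n n] mtrace_smult[of _ n])

lemma trace_smult_mult: "X \<in> carrier_mat n n \<Longrightarrow> A \<in> carrier_mat n n \<Longrightarrow>
  mtrace ((c \<cdot>\<^sub>m A) * X) = c * mtrace (A * X)"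
  by (simp add: mult_smult_assoc_mat[of _ n n] mtrace_smult[of _ n])

lemma conj_add:
  assumes V: "V \<in> carrier_mat n n"
  shows "V * dg n (\<lambda>i. a i + b i) * adj V = V * dg n a * adj V + V * dg n b * adj V"
proof (rule eq_matI)
  fix i j assume "i < dim_row (V * dg n a * adj V + V * dg n b * adj V)" "j < dim_col (V * dg n a * adj V + V * dg n b * adj V)"
  then have ij: "i < n" "j < n" using V by auto
  show "(V * dg n (\<lambda>i. a i + b i) * adj V) $$ (i,j) = (V * dg n a * adj V + V * dg n b * adj V) $$ (i,j)"
    using ij V by (subst conj_entry[OF V ij]) (simp add: conj_entry[OF V ij] sum.distrib algebra_simps del: index_mult_mat(1))
qed (use V in auto)

theorem theorem1:
  fixes n m :: nat and t \<beta>S \<beta>B :: real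
    and HS :: "real \<Rightarrow> complex mat" and HB U :: "complex mat"
    and es :: "nat \<Rightarrow> complex vec" and eps :: "nat \<Rightarrow> real"
    and \<Phi> :: "complex mat \<Rightarrow> complex mat"
    and \<tau>B \<Theta> \<rho>S :: "complex mat"
    and ZS :: "real \<Rightarrow> real" and FS :: "real \<Rightarrow> real"
    and E :: "nat \<Rightarrow> real" and Zt :: real and Q :: real and W :: "nat \<Rightarrow> real"
  assumes n_pos: "0 < n" and m_pos: "0 < m" and t_nonneg: "0 \<le> t"
    and HS_herm: "\<And>s. s \<in> {0..t} \<Longrightarrow> hermitian_mat n (HS s)"
    and HB_herm: "hermitian_mat m HB"
    and U_unit: "unitary_mat (n * m) U"
    and \<beta>S_pos: "0 < \<beta>S" and \<beta>B_pos: "0 < \<beta>B"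
    and es_dim: "\<And>k. k < n \<Longrightarrow> es k \<in> carrier_vec n"
    and es_eig: "\<And>k. k < n \<Longrightarrow> HS 0 *\<^sub>v es k = complex_of_real (eps k) \<cdot>\<^sub>v es k"
    and es_orth: "\<And>k l. k < n \<Longrightarrow> l < n \<Longrightarrow> es k \<bullet>c es l = (if k = l then 1 else 0)"
  defines "ZS \<equiv> (\<lambda>s. part_fun \<beta>S (HS s))"
    and "FS \<equiv> (\<lambda>s. - ln (ZS s) / \<beta>S)"
    and "\<tau>B \<equiv> gibbs \<beta>B HB"
    and "\<Phi> \<equiv> (\<lambda>\<rho>. ptrace_B m (U * kron \<rho> \<tau>B * adj U))"
    and "E \<equiv> (\<lambda>k. Re (mtrace (HS t * \<Phi> (proj (es k)))))"
    and "Zt \<equiv> (\<Sum>k<n. exp (- \<beta>S * E k))"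
    and "\<Theta> \<equiv> msum (n * m) n (\<lambda>k. complex_of_real (exp (- \<beta>S * E k) / Zt) \<cdot>\<^sub>m
                 (U * kron (proj (es k)) \<tau>B * adj U))"
    and "\<rho>S \<equiv> ptrace_B m \<Theta>"
    and "Q \<equiv> Re (mtrace (HB * \<tau>B)) - Re (mtrace (kron (1\<^sub>m n) HB * \<Theta>))"
    and "W \<equiv> (\<lambda>k. (E k - eps k) - Q)"
  shows "(\<Sum>k<n. exp (- \<beta>S * eps k) / ZS 0 * exp (- \<beta>S * W k))
           = exp (- \<beta>S * (FS t - FS 0)) * exp (- rel_entropy \<Theta> (kron (gibbs \<beta>S (HS t)) \<tau>B))
             * exp (- (\<beta>B - \<beta>S) * Q)
       \<and> (\<Sum>k<n. exp (- \<beta>S * eps k) / ZS 0 * W k)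
           \<ge> (FS t - FS 0) + rel_entropy \<rho>S (gibbs \<beta>S (HS t)) / \<beta>S + (\<beta>B - \<beta>S) / \<beta>S * Q"
proof -
  have HSt_herm: "hermitian_mat n (HS t)" using HS_herm t_nonneg by simp
  obtain Wb \<eta> where Wb: "unitary_mat m Wb" and HBd: "HB = Wb * dg m \<eta> * adj Wb"
    using spectral[OF HB_herm] by blast
  obtain Vt h where Vt: "unitary_mat n Vt" and HStd: "HS t = Vt * dg n h * adj Vt"
    using spectral[OF HSt_herm] by blast
  define V0 where "V0 = mat n n (\<lambda>(a,k). es k $ a)"
  have V0: "unitary_mat n V0" unfolding V0_def by (rule es_unitary[OF es_dim es_orth])
  have HS0c: "HS 0 \<in> carrier_mat n n" using HS_herm[of 0] t_nonneg by (auto simp: hermitian_mat_def)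
  have HS0d: "HS 0 = V0 * dg n eps * adj V0" unfolding V0_def by (rule eig_decomp[OF HS0c es_dim es_orth es_eig])
  have projd: "proj (es k) = V0 * dg n (\<lambda>i. if i = k then 1 else 0) * adj V0" if "k < n" for k
    unfolding V0_def by (rule proj_decomp[OF es_dim that])
  note wb = unitaryD[OF Wb] and vt = unitaryD[OF Vt] and v0 = unitaryD[OF V0] and u = unitaryD[OF U_unit]
  have HBc: "HB \<in> carrier_mat m m" using HB_herm by (simp add: hermitian_mat_def)
  have HStc: "HS t \<in> carrier_mat n n" using HSt_herm by (simp add: hermitian_mat_def)

  define ZB where "ZB = part_fun \<beta>B HB"
  have ZB_eq: "ZB = (\<Sum>j<m. exp (- \<beta>B * \<eta> j))" unfolding ZB_def by (rule gibbs_decomp(1)[OF Wb HBd])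
  have ZB_pos: "ZB > 0" using m_pos unfolding ZB_eq by (intro sum_pos) auto
  define g where "g = (\<lambda>j. exp (- \<beta>B * \<eta> j) / ZB)"
  have \<tau>Bd: "\<tau>B = Wb * dg m g * adj Wb" unfolding \<tau>B_def g_def ZB_def by (rule gibbs_decomp(2)[OF Wb HBd])
  have \<tau>Bc: "\<tau>B \<in> carrier_mat m m" using wb unfolding \<tau>Bd by simp
  have g_pos: "g j > 0" for j unfolding g_def using ZB_pos by simp
  have g_sum: "(\<Sum>j<m. g j) = 1" unfolding g_def using ZB_pos by (simp add: ZB_eq sum_divide_distrib[symmetric])
  have ln_g: "ln (g j) = - \<beta>B * \<eta> j - ln ZB" for j unfolding g_def using ZB_pos by (simp add: ln_div)

  define ZSt where "ZSt = ZS t"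
  have ZSt_eq: "ZSt = (\<Sum>i<n. exp (- \<beta>S * h i))" unfolding ZSt_def ZS_def by (rule gibbs_decomp(1)[OF Vt HStd])
  have ZSt_pos: "ZSt > 0" using n_pos unfolding ZSt_eq by (intro sum_pos) auto
  define \<sigma> where "\<sigma> = (\<lambda>i. exp (- \<beta>S * h i) / ZSt)"
  have \<tau>Sd: "gibbs \<beta>S (HS t) = Vt * dg n \<sigma> * adj Vt"
    unfolding \<sigma>_def ZSt_def ZS_def by (rule gibbs_decomp(2)[OF Vt HStd])
  have \<sigma>_pos: "\<sigma> i > 0" for i unfolding \<sigma>_def using ZSt_pos by simp
  have ln_\<sigma>: "ln (\<sigma> i) = - \<beta>S * h i - ln ZSt" for i unfolding \<sigma>_def using ZSt_pos by (simp add: ln_div)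
  define ZS0 where "ZS0 = ZS 0"
  have ZS0_eq: "ZS0 = (\<Sum>k<n. exp (- \<beta>S * eps k))" unfolding ZS0_def ZS_def by (rule gibbs_decomp(1)[OF V0 HS0d])
  have ZS0_pos: "ZS0 > 0" using n_pos unfolding ZS0_eq by (intro sum_pos) auto

  have Zt_pos: "Zt > 0" unfolding Zt_def using n_pos by (intro sum_pos) auto
  define p where "p = (\<lambda>k. exp (- \<beta>S * E k) / Zt)"
  have p_pos: "p k > 0" for k unfolding p_def using Zt_pos by simp
  have p_sum: "(\<Sum>k<n. p k) = 1" unfolding p_def using Zt_pos by (simp add: Zt_def sum_divide_distrib[symmetric])
  have ln_p: "ln (p k) = - \<beta>S * E k - ln Zt" for k unfolding p_def using Zt_pos by (simp add: ln_div)

  define R where "R = U * kron V0 Wb"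
  have R: "unitary_mat (n*m) R" unfolding R_def by (intro unitary_mult[OF U_unit] unitary_kron[OF V0 Wb m_pos])
  note rr = unitaryD[OF R]
  define lam where "lam = (\<lambda>r. p (r div m) * g (r mod m))"
  have termd: "U * kron (proj (es k)) \<tau>B * adj U = R * dg (n*m) (\<lambda>r. (if r div m = k then 1 else 0) * g (r mod m)) * adj R"
    if k: "k < n" for k
  proof -
    have Xc: "kron V0 Wb \<in> carrier_mat (n*m) (n*m)" using v0 wb by simp
    have "kron (proj (es k)) \<tau>B = kron V0 Wb * dg (n*m) (\<lambda>s. (if s div m = k then 1 else 0) * g (s mod m)) * adj (kron V0 Wb)"
      unfolding projd[OF k] \<tau>Bd by (rule conj_kron[OF v0(1) wb(1) m_pos])
    then show ?thesis unfolding R_def using u Xc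
      by (simp add: adj_mult[of U "n*m" "n*m" _ "n*m"] sq_assoc[of _ "n*m"])
  qed
  have \<Theta>d: "\<Theta> = R * dg (n*m) lam * adj R"
  proof -
    have "\<Theta> = msum (n*m) n (\<lambda>k. complex_of_real (p k) \<cdot>\<^sub>m (R * dg (n*m) (\<lambda>r. (if r div m = k then 1 else 0) * g (r mod m)) * adj R))"
      unfolding \<Theta>_def p_def by (intro msum_cong) (simp add: termd)
    also have "\<dots> = R * dg (n*m) (\<lambda>r. \<Sum>k<n. p k * ((if r div m = k then 1 else 0) * g (r mod m))) * adj R"
      by (rule msum_conj) (use rr in simp)
    also have "dg (n*m) (\<lambda>r. \<Sum>k<n. p k * ((if r div m = k then 1 else 0) * g (r mod m))) = dg (n*m) lam"
    proof (rule mat_diag_cong)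
      fix r assume r: "r < n*m"
      then have rd: "r div m < n" by (simp add: less_mult_imp_div_less)
      have "(\<Sum>k<n. p k * ((if r div m = k then 1 else 0) * g (r mod m))) = (\<Sum>k<n. if k = r div m then p k * g (r mod m) else 0)"
        by (intro sum.cong refl) auto
      also have "\<dots> = lam r" using rd unfolding lam_def by simp
      finally show "complex_of_real (\<Sum>k<n. p k * ((if r div m = k then 1 else 0) * g (r mod m))) = complex_of_real (lam r)" by simp
    qed
    finally show ?thesis .
  qed
  have \<Theta>c: "\<Theta> \<in> carrier_mat (n*m) (n*m)" unfolding \<Theta>d using rr by simp
  have lam_pos: "lam r > 0" for r unfolding lam_def using p_pos g_pos by simp
  have lam_sum: "(\<Sum>r<n*m. lam r) = 1"
  proof -
    have "(\<Sum>r<n*m. lam r) = (\<Sum>i<n. \<Sum>j<m. p i * g j)"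
      unfolding sum_nm by (intro sum.cong refl) (simp add: lam_def)
    also have "\<dots> = (\<Sum>i<n. p i) * (\<Sum>j<m. g j)" by (simp add: sum_product)
    finally show ?thesis using p_sum g_sum by simp
  qed
  have tr\<Theta>: "mtrace \<Theta> = 1"
  proof -
    have "mtrace \<Theta> = (\<Sum>r<n*m. complex_of_real (lam r))" unfolding \<Theta>d using R by (simp add: trace_unitary_conj mtrace_dg)
    also have "\<dots> = complex_of_real (\<Sum>r<n*m. lam r)" by (rule of_real_sum[symmetric])
    finally show ?thesis using lam_sum by simp
  qed
  have mln\<Theta>: "mln \<Theta> = R * dg (n*m) (\<lambda>r. ln (lam r)) * adj R" unfolding mln_def by (rule hfun_eq[OF R \<Theta>d])
  have SL: "Re (mtrace (\<Theta> * mln \<Theta>)) = (\<Sum>r<n*m. lam r * ln (lam r))"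
    unfolding mln\<Theta> by (subst \<Theta>d) (simp add: trace_dg_dg[OF R])
  have SL2: "(\<Sum>r<n*m. lam r * ln (lam r)) = (\<Sum>k<n. p k * ln (p k)) + (\<Sum>j<m. g j * ln (g j))"
  proof -
    have "(\<Sum>r<n*m. lam r * ln (lam r)) = (\<Sum>i<n. \<Sum>j<m. (p i * ln (p i)) * g j + p i * (g j * ln (g j)))"
      unfolding sum_nm by (intro sum.cong refl) (simp add: lam_def ln_mult p_pos g_pos algebra_simps)
    also have "\<dots> = (\<Sum>i<n. p i * ln (p i)) * (\<Sum>j<m. g j) + (\<Sum>i<n. p i) * (\<Sum>j<m. g j * ln (g j))"
      by (simp add: sum.distrib sum_product)
    finally show ?thesis using p_sum g_sum by simp
  qed
  have \<rho>Sc: "\<rho>S \<in> carrier_mat n n" unfolding \<rho>S_def using \<Theta>c m_pos by simp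
  have tr\<rho>: "mtrace \<rho>S = 1"
  proof -
    have "mtrace \<rho>S = mtrace (1\<^sub>m n * \<rho>S)" using \<rho>Sc by simp
    also have "\<dots> = mtrace (kron (1\<^sub>m n) (1\<^sub>m m) * \<Theta>)" unfolding \<rho>S_def by (rule trace_ptrace[OF \<Theta>c one_carrier_mat m_pos])
    also have "\<dots> = mtrace \<Theta>" using \<Theta>c m_pos by (simp add: kron_one)
    finally show ?thesis using tr\<Theta> by simp
  qed

  define LS where "LS = Vt * dg n (\<lambda>i. ln (\<sigma> i)) * adj Vt"
  define LB where "LB = Wb * dg m (\<lambda>j. ln (g j)) * adj Wb"
  have mln\<tau>S: "mln (gibbs \<beta>S (HS t)) = LS" unfolding mln_def LS_def by (rule hfun_eq[OF Vt \<tau>Sd])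
  have LSd: "LS = complex_of_real (- \<beta>S) \<cdot>\<^sub>m HS t + complex_of_real (- ln ZSt) \<cdot>\<^sub>m 1\<^sub>m n"
  proof -
    have "dg n (\<lambda>i. ln (\<sigma> i)) = dg n (\<lambda>i. (- \<beta>S) * h i + (- ln ZSt))" by (rule mat_diag_cong) (simp add: ln_\<sigma>)
    then show ?thesis unfolding LS_def using conj_lin[OF Vt, of "- \<beta>S" h "- ln ZSt"] HStd by simp
  qed
  have LBd: "LB = complex_of_real (- \<beta>B) \<cdot>\<^sub>m HB + complex_of_real (- ln ZB) \<cdot>\<^sub>m 1\<^sub>m m"
  proof -
    have "dg m (\<lambda>j. ln (g j)) = dg m (\<lambda>j. (- \<beta>B) * \<eta> j + (- ln ZB))" by (rule mat_diag_cong) (simp add: ln_g)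
    then show ?thesis unfolding LB_def using conj_lin[OF Wb, of "- \<beta>B" \<eta> "- ln ZB"] HBd by simp
  qed
  have LSc: "LS \<in> carrier_mat n n" unfolding LS_def using vt by simp
  have LBc: "LB \<in> carrier_mat m m" unfolding LB_def using wb by simp
  have mlnK: "mln (kron (gibbs \<beta>S (HS t)) \<tau>B) = kron LS (1\<^sub>m m) + kron (1\<^sub>m n) LB"
  proof -
    define X where "X = kron Vt Wb"
    have X: "unitary_mat (n*m) X" unfolding X_def by (rule unitary_kron[OF Vt Wb m_pos])
    have Xc: "X \<in> carrier_mat (n*m) (n*m)" using unitaryD[OF X] by simp
    have K: "kron (gibbs \<beta>S (HS t)) \<tau>B = X * dg (n*m) (\<lambda>s. \<sigma> (s div m) * g (s mod m)) * adj X"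
      unfolding \<tau>Sd \<tau>Bd X_def by (rule conj_kron[OF vt(1) wb(1) m_pos])
    have "mln (kron (gibbs \<beta>S (HS t)) \<tau>B) = X * dg (n*m) (\<lambda>s. ln (\<sigma> (s div m) * g (s mod m))) * adj X"
      unfolding mln_def by (rule hfun_eq[OF X K])
    also have "dg (n*m) (\<lambda>s. ln (\<sigma> (s div m) * g (s mod m))) = dg (n*m) (\<lambda>s. ln (\<sigma> (s div m)) * 1 + 1 * ln (g (s mod m)))"
      by (rule mat_diag_cong) (simp add: ln_mult_pos[OF \<sigma>_pos g_pos])
    also have "X * \<dots> * adj X = X * dg (n*m) (\<lambda>s. ln (\<sigma> (s div m)) * 1) * adj X + X * dg (n*m) (\<lambda>s. 1 * ln (g (s mod m))) * adj X"
      by (rule conj_add[OF Xc])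
    also have "X * dg (n*m) (\<lambda>s. ln (\<sigma> (s div m)) * 1) * adj X = kron LS (Wb * dg m (\<lambda>_. 1) * adj Wb)"
      unfolding LS_def X_def by (rule conj_kron[OF vt(1) wb(1) m_pos, symmetric])
    also have "X * dg (n*m) (\<lambda>s. 1 * ln (g (s mod m))) * adj X = kron (Vt * dg n (\<lambda>_. 1) * adj Vt) LB"
      unfolding LB_def X_def by (rule conj_kron[OF vt(1) wb(1) m_pos, symmetric])
    also have "Wb * dg m (\<lambda>_. 1) * adj Wb = 1\<^sub>m m" using wb by simp
    also have "Vt * dg n (\<lambda>_. 1) * adj Vt = 1\<^sub>m n" using vt by simp
    finally show ?thesis .
  qed

  define G where "G = (\<Sum>k<n. p k * E k)"
  define Y where "Y = Re (mtrace (kron (1\<^sub>m n) HB * \<Theta>))"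
  define HBav where "HBav = (\<Sum>j<m. \<eta> j * g j)"
  have trLS: "mtrace (\<Theta> * kron LS (1\<^sub>m m)) = mtrace (\<rho>S * LS)"
  proof -
    have "mtrace (\<Theta> * kron LS (1\<^sub>m m)) = mtrace (kron LS (1\<^sub>m m) * \<Theta>)"
      using \<Theta>c LSc by (intro mtrace_comm[of _ "n*m" "n*m"]) auto
    also have "\<dots> = mtrace (LS * \<rho>S)" unfolding \<rho>S_def by (rule trace_ptrace[OF \<Theta>c LSc m_pos, symmetric])
    also have "\<dots> = mtrace (\<rho>S * LS)" using \<rho>Sc LSc by (intro mtrace_comm[of _ n n]) auto
    finally show ?thesis .
  qed
  have G_eq: "Re (mtrace (\<rho>S * HS t)) = G"
  proof -
    define T where "T = (\<lambda>k. U * kron (proj (es k)) \<tau>B * adj U)"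
    have Tc: "T k \<in> carrier_mat (n*m) (n*m)" if "k < n" for k
    proof -
      have "proj (es k) \<in> carrier_mat n n" using es_dim[OF that] by (simp add: proj_def)
      then show ?thesis unfolding T_def using u \<tau>Bc by (metis kron_carrier mult_carrier_mat adj_carrier)
    qed
    have KHc: "kron (HS t) (1\<^sub>m m) \<in> carrier_mat (n*m) (n*m)" using HStc by simp
    have "mtrace (\<rho>S * HS t) = mtrace (HS t * \<rho>S)" using \<rho>Sc HStc by (intro mtrace_comm[of _ n n]) auto
    also have "\<dots> = mtrace (kron (HS t) (1\<^sub>m m) * \<Theta>)" unfolding \<rho>S_def by (rule trace_ptrace[OF \<Theta>c HStc m_pos])
    also have "\<dots> = (\<Sum>k<n. mtrace (kron (HS t) (1\<^sub>m m) * (complex_of_real (p k) \<cdot>\<^sub>m T k)))"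
      unfolding \<Theta>_def p_def T_def by (rule trace_msum[OF KHc]) (use Tc[unfolded T_def] in simp)
    also have "\<dots> = (\<Sum>k<n. complex_of_real (p k) * mtrace (HS t * \<Phi> (proj (es k))))"
    proof (intro sum.cong refl)
      fix k assume k: "k \<in> {..<n}"
      have "mtrace (kron (HS t) (1\<^sub>m m) * (complex_of_real (p k) \<cdot>\<^sub>m T k)) = complex_of_real (p k) * mtrace (kron (HS t) (1\<^sub>m m) * T k)"
        using KHc Tc k by (intro trace_mult_smult) auto
      also have "mtrace (kron (HS t) (1\<^sub>m m) * T k) = mtrace (HS t * \<Phi> (proj (es k)))"
        unfolding \<Phi>_def T_def by (rule trace_ptrace[OF Tc[unfolded T_def] HStc m_pos, symmetric]) (use k in simp)
      finally show "mtrace (kron (HS t) (1\<^sub>m m) * (complex_of_real (p k) \<cdot>\<^sub>m T k)) = complex_of_real (p k) * mtrace (HS t * \<Phi> (proj (es k)))" .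
    qed
    finally show ?thesis unfolding G_def E_def by simp
  qed
  have tr\<rho>LS: "Re (mtrace (\<rho>S * LS)) = - \<beta>S * G - ln ZSt"
  proof -
    have "mtrace (\<rho>S * LS) = complex_of_real (- \<beta>S) * mtrace (\<rho>S * HS t) + complex_of_real (- ln ZSt) * mtrace (\<rho>S * 1\<^sub>m n)"
      unfolding LSd using \<rho>Sc HStc by (simp add: trace_mult_add[of _ n] trace_mult_smult[of _ n])
    then show ?thesis using G_eq tr\<rho> \<rho>Sc by simp
  qed
  have trLB: "Re (mtrace (\<Theta> * kron (1\<^sub>m n) LB)) = - \<beta>B * Y - ln ZB"
  proof -
    have "kron (1\<^sub>m n) LB = complex_of_real (- \<beta>B) \<cdot>\<^sub>m kron (1\<^sub>m n) HB + complex_of_real (- ln ZB) \<cdot>\<^sub>m 1\<^sub>m (n*m)"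
      unfolding LBd using HBc m_pos by (simp add: kron_add_right[of _ n n _ m m] kron_smult_right[of _ n n _ m m] kron_one)
    then have "mtrace (\<Theta> * kron (1\<^sub>m n) LB) = complex_of_real (- \<beta>B) * mtrace (\<Theta> * kron (1\<^sub>m n) HB) + complex_of_real (- ln ZB) * mtrace \<Theta>"
      using \<Theta>c HBc by (simp add: trace_mult_add[of _ "n*m"] trace_mult_smult[of _ "n*m"])
    moreover have "mtrace (\<Theta> * kron (1\<^sub>m n) HB) = mtrace (kron (1\<^sub>m n) HB * \<Theta>)"
      using \<Theta>c HBc by (intro mtrace_comm[of _ "n*m" "n*m"]) auto
    ultimately show ?thesis unfolding Y_def using tr\<Theta> by simp
  qed
  have HBav_eq: "Re (mtrace (HB * \<tau>B)) = HBav"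
    unfolding HBd \<tau>Bd HBav_def by (simp add: trace_dg_dg[OF Wb])
  have Q_eq: "Q = HBav - Y" unfolding Q_def Y_def HBav_eq ..
  have plnp: "(\<Sum>k<n. p k * ln (p k)) = - \<beta>S * G - ln Zt"
  proof -
    have "(\<Sum>k<n. p k * ln (p k)) = (\<Sum>k<n. - \<beta>S * (p k * E k) - ln Zt * p k)"
      by (intro sum.cong refl) (simp add: ln_p algebra_simps)
    also have "\<dots> = - \<beta>S * G - ln Zt * (\<Sum>k<n. p k)" unfolding G_def by (simp add: sum_subtractf sum_distrib_left)
    finally show ?thesis using p_sum by simp
  qed
  have glng: "(\<Sum>j<m. g j * ln (g j)) = - \<beta>B * HBav - ln ZB"
  proof -
    have "(\<Sum>j<m. g j * ln (g j)) = (\<Sum>j<m. - \<beta>B * (\<eta> j * g j) - ln ZB * g j)"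
      by (intro sum.cong refl) (simp add: ln_g algebra_simps)
    also have "\<dots> = - \<beta>B * HBav - ln ZB * (\<Sum>j<m. g j)" unfolding HBav_def by (simp add: sum_subtractf sum_distrib_left)
    finally show ?thesis using g_sum by simp
  qed
  have D\<Theta>: "rel_entropy \<Theta> (kron (gibbs \<beta>S (HS t)) \<tau>B) = ln ZSt - ln Zt - \<beta>B * Q"
  proof -
    have "mtrace (\<Theta> * mln (kron (gibbs \<beta>S (HS t)) \<tau>B)) = mtrace (\<Theta> * kron LS (1\<^sub>m m)) + mtrace (\<Theta> * kron (1\<^sub>m n) LB)"
      unfolding mlnK using \<Theta>c LSc LBc by (intro trace_mult_add[of _ "n*m"]) auto
    then have "rel_entropy \<Theta> (kron (gibbs \<beta>S (HS t)) \<tau>B) = (\<Sum>r<n*m. lam r * ln (lam r)) - (- \<beta>S * G - ln ZSt) - (- \<beta>B * Y - ln ZB)"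
      unfolding rel_entropy_def using SL trLS tr\<rho>LS trLB by simp
    then show ?thesis unfolding SL2 plnp glng Q_eq by (simp add: algebra_simps)
  qed

  have lhs1: "(\<Sum>k<n. exp (- \<beta>S * eps k) / ZS 0 * exp (- \<beta>S * W k)) = Zt * exp (\<beta>S * Q) / ZS0"
  proof -
    have "(\<Sum>k<n. exp (- \<beta>S * eps k) / ZS 0 * exp (- \<beta>S * W k)) = (\<Sum>k<n. exp (- \<beta>S * E k) * (exp (\<beta>S * Q) / ZS0))"
    proof (intro sum.cong refl)
      fix k
      have "exp (- \<beta>S * eps k) * exp (- \<beta>S * W k) = exp (- \<beta>S * E k) * exp (\<beta>S * Q)"
        unfolding W_def by (simp add: exp_add[symmetric] algebra_simps)
      then show "exp (- \<beta>S * eps k) / ZS 0 * exp (- \<beta>S * W k) = exp (- \<beta>S * E k) * (exp (\<beta>S * Q) / ZS0)"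
        unfolding ZS0_def by (simp add: field_simps)
    qed
    also have "\<dots> = Zt * exp (\<beta>S * Q) / ZS0" unfolding Zt_def by (simp add: sum_distrib_right sum_divide_distrib)
    finally show ?thesis .
  qed
  have part1: "(\<Sum>k<n. exp (- \<beta>S * eps k) / ZS 0 * exp (- \<beta>S * W k))
           = exp (- \<beta>S * (FS t - FS 0)) * exp (- rel_entropy \<Theta> (kron (gibbs \<beta>S (HS t)) \<tau>B))
             * exp (- (\<beta>B - \<beta>S) * Q)"
  proof -
    have "exp (- \<beta>S * (FS t - FS 0)) * exp (- rel_entropy \<Theta> (kron (gibbs \<beta>S (HS t)) \<tau>B))
             * exp (- (\<beta>B - \<beta>S) * Q)
        = exp (- \<beta>S * (FS t - FS 0) + (- rel_entropy \<Theta> (kron (gibbs \<beta>S (HS t)) \<tau>B)) + (- (\<beta>B - \<beta>S) * Q))"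
      by (simp only: exp_add)
    also have "- \<beta>S * (FS t - FS 0) + (- rel_entropy \<Theta> (kron (gibbs \<beta>S (HS t)) \<tau>B)) + (- (\<beta>B - \<beta>S) * Q)
        = ln Zt - ln ZS0 + \<beta>S * Q"
      unfolding D\<Theta> FS_def ZSt_def[symmetric] ZS0_def[symmetric] using \<beta>S_pos by (simp add: field_simps)
    also have "exp (ln Zt - ln ZS0 + \<beta>S * Q) = Zt * exp (\<beta>S * Q) / ZS0"
      using Zt_pos ZS0_pos by (simp add: exp_add exp_diff)
    finally show ?thesis using lhs1 by simp
  qed

  have klein_main: "- \<beta>S * G - ln Zt - \<beta>B * HBav \<ge> Re (mtrace (\<rho>S * mln \<rho>S)) - \<beta>B * Y"
  proof -
    have \<rho>h: "hermitian_mat n \<rho>S"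
    proof -
      have "adj \<Theta> = \<Theta>" unfolding \<Theta>d using rr by (simp add: adj_mult[of _ "n*m" "n*m" _ "n*m"] sq_assoc[of _ "n*m"])
      then have "adj \<rho>S = \<rho>S" unfolding \<rho>S_def using adj_ptrace[OF \<Theta>c m_pos] by simp
      then show ?thesis using \<rho>Sc by (simp add: hermitian_mat_def)
    qed
    obtain A a where A: "unitary_mat n A" and \<rho>d: "\<rho>S = A * dg n a * adj A" using spectral[OF \<rho>h] by blast
    note aa = unitaryD[OF A]
    have mln\<rho>: "mln \<rho>S = A * dg n (\<lambda>i. ln (a i)) * adj A" unfolding mln_def by (rule hfun_eq[OF A \<rho>d])
    have Sr_eq: "Re (mtrace (\<rho>S * mln \<rho>S)) = (\<Sum>i<n. a i * ln (a i))"
      unfolding mln\<rho> by (subst \<rho>d) (simp add: trace_dg_dg[OF A])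
    have a_sum: "(\<Sum>i<n. a i) = 1"
    proof -
      have "mtrace \<rho>S = complex_of_real (\<Sum>i<n. a i)" unfolding \<rho>d using A aa by (simp add: trace_unitary_conj mtrace_dg)
      then show ?thesis using tr\<rho> by (metis of_real_1 of_real_eq_iff)
    qed
    define X where "X = kron A Wb"
    have X: "unitary_mat (n*m) X" unfolding X_def by (rule unitary_kron[OF A Wb m_pos])
    define M where "M = adj X * R"
    have M: "unitary_mat (n*m) M" unfolding M_def by (rule unitary_mult[OF unitary_adj[OF X] R])
    define w where "w = (\<lambda>s r. (cmod (M $$ (s,r)))^2)"
    define q where "q = (\<lambda>s. \<Sum>r<n*m. w s r * lam r)"
    have Ggen: "mtrace (kron (A * dg n u * adj A) (Wb * dg m v * adj Wb) * \<Theta>) = complex_of_real (\<Sum>s<n*m. (u (s div m) * v (s mod m)) * q s)" for u v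
    proof -
      have kx: "kron (A * dg n u * adj A) (Wb * dg m v * adj Wb) = X * dg (n*m) (\<lambda>s. u (s div m) * v (s mod m)) * adj X"
        unfolding X_def by (rule conj_kron[OF aa(1) wb(1) m_pos])
      show ?thesis unfolding \<Theta>d kx q_def w_def M_def by (rule trace_two_conj[OF X R])
    qed
    have Y_eq: "Y = (\<Sum>s<n*m. \<eta> (s mod m) * q s)"
    proof -
      have "kron (1\<^sub>m n) HB = kron (A * dg n (\<lambda>_. 1) * adj A) (Wb * dg m \<eta> * adj Wb)" using aa HBd by simp
      then show ?thesis unfolding Y_def using Ggen[of "\<lambda>_. 1" \<eta>] by simp
    qed
    have aq: "a i = (\<Sum>j<m. q (i*m+j))" if i: "i < n" for i
    proof -
      define \<delta> where "\<delta> = (\<lambda>l. if l = i then 1 else (0::real))"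
      have Zc: "A * dg n \<delta> * adj A \<in> carrier_mat n n" using aa by simp
      have "(\<Sum>l<n. \<delta> l * a l) = (\<Sum>l<n. if l = i then a l else 0)" by (intro sum.cong refl) (simp add: \<delta>_def)
      also have "\<dots> = a i" using i by simp
      finally have da: "(\<Sum>l<n. \<delta> l * a l) = a i" .
      have "complex_of_real (a i) = mtrace (A * dg n \<delta> * adj A * \<rho>S)"
        unfolding \<rho>d trace_dg_dg[OF A] of_real_sum[symmetric] da ..
      also have "\<dots> = mtrace (kron (A * dg n \<delta> * adj A) (1\<^sub>m m) * \<Theta>)"
        unfolding \<rho>S_def by (rule trace_ptrace[OF \<Theta>c Zc m_pos])
      also have "kron (A * dg n \<delta> * adj A) (1\<^sub>m m) = kron (A * dg n \<delta> * adj A) (Wb * dg m (\<lambda>_. 1) * adj Wb)"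
        using wb by simp
      also have "mtrace (kron (A * dg n \<delta> * adj A) (Wb * dg m (\<lambda>_. 1) * adj Wb) * \<Theta>)
          = complex_of_real (\<Sum>s<n*m. (\<delta> (s div m) * 1) * q s)" by (rule Ggen)
      also have "(\<Sum>s<n*m. (\<delta> (s div m) * 1) * q s) = (\<Sum>i'<n. \<Sum>j<m. \<delta> i' * q (i'*m+j))"
        unfolding sum_nm by (intro sum.cong refl) simp
      also have "\<dots> = (\<Sum>i'<n. if i' = i then (\<Sum>j<m. q (i'*m+j)) else 0)"
        by (intro sum.cong refl) (simp add: \<delta>_def)
      also have "\<dots> = (\<Sum>j<m. q (i*m+j))" using i by simp
      finally show ?thesis by (metis of_real_eq_iff)
    qed
    have w0: "w s r \<ge> 0" for s r unfolding w_def by simp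
    have rows: "(\<Sum>r<n*m. w s r) = 1" if s: "s < n*m" for s
    proof -
      have "complex_of_real (\<Sum>r<n*m. w s r) = (\<Sum>r<n*m. M $$ (s,r) * cnj (M $$ (s,r)))"
        unfolding of_real_sum w_def by (intro sum.cong refl) (rule complex_norm_square)
      also have "\<dots> = 1" using unitary_rows[OF M s s] by simp
      finally show ?thesis by (metis of_real_1 of_real_eq_iff)
    qed
    have cols: "(\<Sum>s<n*m. w s r) = 1" if r: "r < n*m" for r
    proof -
      have "complex_of_real (\<Sum>s<n*m. w s r) = (\<Sum>s<n*m. cnj (M $$ (s,r)) * M $$ (s,r))"
        unfolding of_real_sum w_def by (intro sum.cong refl) (metis complex_norm_square mult.commute)
      also have "\<dots> = 1" using unitary_cols[OF M r r] by simp
      finally show ?thesis by (metis of_real_1 of_real_eq_iff)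
    qed
    have q_pos: "q s > 0" if s: "s < n*m" for s
    proof -
      have "\<exists>r<n*m. w s r \<noteq> 0"
      proof (rule ccontr)
        assume "\<not> (\<exists>r<n*m. w s r \<noteq> 0)"
        then have "(\<Sum>r<n*m. w s r) = 0" by simp
        then show False using rows[OF s] by simp
      qed
      then obtain r where r: "r < n*m" "w s r \<noteq> 0" by blast
      have wl: "w s r * lam r > 0" using r w0[of s r] lam_pos[of r] by simp
      have wl0: "0 \<le> w s i * lam i" for i using w0[of s i] lam_pos[of i] by simp
      show ?thesis unfolding q_def
        by (rule sum_pos2[where I="{..<n*m}" and i=r]) (use r wl wl0 in auto)
    qed
    have a_pos: "a i > 0" if i: "i < n" for i
      unfolding aq[OF i] using m_pos q_pos idx_lt[OF i] by (intro sum_pos) auto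
    define y where "y = (\<lambda>s. a (s div m) * g (s mod m))"
    have y_pos: "y s > 0" if s: "s < n*m" for s
      unfolding y_def using a_pos[of "s div m"] g_pos s by (simp add: less_mult_imp_div_less)
    have kl: "(\<Sum>r<n*m. lam r * ln (lam r)) \<ge> (\<Sum>s<n*m. (\<Sum>r<n*m. w s r * lam r) * ln (y s)) + (\<Sum>r<n*m. lam r) - (\<Sum>s<n*m. y s)"
      by (rule klein[OF w0 rows cols lam_pos y_pos])
    have y_sum: "(\<Sum>s<n*m. y s) = 1"
    proof -
      have "(\<Sum>s<n*m. y s) = (\<Sum>i<n. \<Sum>j<m. a i * g j)" unfolding sum_nm y_def by (intro sum.cong refl) simp
      also have "\<dots> = (\<Sum>i<n. a i) * (\<Sum>j<m. g j)" by (simp add: sum_product)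
      finally show ?thesis using a_sum g_sum by simp
    qed
    have q_sum: "(\<Sum>s<n*m. q s) = 1"
    proof -
      have "(\<Sum>s<n*m. q s) = (\<Sum>i<n. a i)" unfolding sum_nm by (intro sum.cong refl) (simp add: aq)
      then show ?thesis using a_sum by simp
    qed
    have qlny: "(\<Sum>s<n*m. q s * ln (y s)) = (\<Sum>i<n. a i * ln (a i)) - \<beta>B * Y - ln ZB"
    proof -
      have "(\<Sum>s<n*m. q s * ln (y s)) = (\<Sum>s<n*m. q s * ln (a (s div m))) + (\<Sum>s<n*m. - \<beta>B * (\<eta> (s mod m) * q s) - ln ZB * q s)"
      proof -
        have "(\<Sum>s<n*m. q s * ln (y s)) = (\<Sum>s<n*m. q s * ln (a (s div m)) + (- \<beta>B * (\<eta> (s mod m) * q s) - ln ZB * q s))"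
        proof (intro sum.cong refl)
          fix s assume s: "s \<in> {..<n*m}"
          have "ln (y s) = ln (a (s div m)) + ln (g (s mod m))"
            unfolding y_def using s a_pos[of "s div m"] g_pos by (simp add: ln_mult_pos less_mult_imp_div_less)
          then have e2: "ln (y s) = ln (a (s div m)) + (- \<beta>B * \<eta> (s mod m) - ln ZB)" by (simp only: ln_g)
          show "q s * ln (y s) = q s * ln (a (s div m)) + (- \<beta>B * (\<eta> (s mod m) * q s) - ln ZB * q s)"
            unfolding e2 by (simp add: algebra_simps)
        qed
        then show ?thesis by (simp add: sum.distrib)
      qed
      also have "(\<Sum>s<n*m. q s * ln (a (s div m))) = (\<Sum>i<n. a i * ln (a i))"
      proof -
        have "(\<Sum>s<n*m. q s * ln (a (s div m))) = (\<Sum>i<n. (\<Sum>j<m. q (i*m+j)) * ln (a i))"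
          unfolding sum_nm by (intro sum.cong refl) (simp add: sum_distrib_right)
        then show ?thesis by (simp add: aq)
      qed
      also have "(\<Sum>s<n*m. - \<beta>B * (\<eta> (s mod m) * q s) - ln ZB * q s) = - \<beta>B * Y - ln ZB"
      proof -
        have "(\<Sum>s<n*m. - \<beta>B * (\<eta> (s mod m) * q s) - ln ZB * q s) = - \<beta>B * (\<Sum>s<n*m. \<eta> (s mod m) * q s) - ln ZB * (\<Sum>s<n*m. q s)"
          by (simp add: sum_subtractf sum_distrib_left)
        then show ?thesis unfolding Y_eq q_sum by simp
      qed
      finally show ?thesis by simp
    qed
    have "(\<Sum>r<n*m. lam r * ln (lam r)) \<ge> (\<Sum>i<n. a i * ln (a i)) - \<beta>B * Y - ln ZB"
      using kl lam_sum y_sum qlny unfolding q_def by simp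
    then show ?thesis unfolding Sr_eq SL2 plnp glng by simp
  qed
  have D\<rho>: "rel_entropy \<rho>S (gibbs \<beta>S (HS t)) = Re (mtrace (\<rho>S * mln \<rho>S)) + \<beta>S * G + ln ZSt"
    unfolding rel_entropy_def mln\<tau>S using tr\<rho>LS by simp
  have part2: "(\<Sum>k<n. exp (- \<beta>S * eps k) / ZS 0 * W k)
           \<ge> (FS t - FS 0) + rel_entropy \<rho>S (gibbs \<beta>S (HS t)) / \<beta>S + (\<beta>B - \<beta>S) / \<beta>S * Q"
  proof -
    define P where "P = (\<lambda>k. exp (- \<beta>S * eps k) / ZS0)"
    have P0: "P k \<ge> 0" for k unfolding P_def using ZS0_pos by simp
    have P1: "(\<Sum>k<n. P k) = 1" unfolding P_def using ZS0_pos by (simp add: ZS0_eq sum_divide_distrib[symmetric])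
    define Wav where "Wav = (\<Sum>k<n. P k * W k)"
    have Wav_eq: "(\<Sum>k<n. exp (- \<beta>S * eps k) / ZS 0 * W k) = Wav" unfolding Wav_def P_def ZS0_def ..
    have "exp (\<Sum>k<n. P k * (- \<beta>S * W k)) \<le> (\<Sum>k<n. P k * exp (- \<beta>S * W k))"
      by (rule jensen_exp[OF P0 P1])
    also have "\<dots> = Zt * exp (\<beta>S * Q) / ZS0" using lhs1 unfolding P_def ZS0_def by simp
    also have "(\<Sum>k<n. P k * (- \<beta>S * W k)) = - \<beta>S * Wav" unfolding Wav_def by (simp add: sum_distrib_left mult_ac)
    finally have "exp (- \<beta>S * Wav) \<le> Zt * exp (\<beta>S * Q) / ZS0" .
    then have "- \<beta>S * Wav \<le> ln (Zt * exp (\<beta>S * Q) / ZS0)"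
      using Zt_pos ZS0_pos by (metis exp_le_cancel_iff exp_ln divide_pos_pos exp_gt_zero mult_pos_pos)
    also have "\<dots> = ln Zt + \<beta>S * Q - ln ZS0" using Zt_pos ZS0_pos by (simp add: ln_div ln_mult_pos)
    finally have J: "- \<beta>S * Wav \<le> ln Zt + \<beta>S * Q - ln ZS0" .
    define Sr where "Sr = Re (mtrace (\<rho>S * mln \<rho>S))"
    have K: "Sr \<le> - \<beta>S * G - ln Zt - \<beta>B * Q" using klein_main unfolding Sr_def Q_eq by (simp add: algebra_simps)
    have "\<beta>S * ((FS t - FS 0) + rel_entropy \<rho>S (gibbs \<beta>S (HS t)) / \<beta>S + (\<beta>B - \<beta>S) / \<beta>S * Q)
        = ln ZS0 + Sr + \<beta>S * G + (\<beta>B - \<beta>S) * Q"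
      unfolding D\<rho> FS_def ZSt_def[symmetric] ZS0_def[symmetric] Sr_def using \<beta>S_pos by (simp add: field_simps)
    also have "\<dots> \<le> \<beta>S * Wav" using J K by (simp add: algebra_simps)
    finally have "\<beta>S * ((FS t - FS 0) + rel_entropy \<rho>S (gibbs \<beta>S (HS t)) / \<beta>S + (\<beta>B - \<beta>S) / \<beta>S * Q) \<le> \<beta>S * Wav" .
    then show ?thesis unfolding Wav_eq using \<beta>S_pos by simp
  qed
  show ?thesis using part1 part2 by blast
qed

end
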